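(* Let $R$ be a $\Gamma$-ring, let $R_n$ be the discrete $\Gamma$-ring of $n$-simplices ($R_n(K)=R(K)_n$), and let $G_n$ be the group of invertible elements of the monoid $R_n[1]$; these form a simplicial group $G_\ast$. Let $G_\ast$ act on the simplicial set $FDL(R)_\ast$ (whose $n$-simplices are the formal difference laws in $R_n$) by conjugation $a\cdot r=a\,r\,a^{-1}$, and on the simplicial set $\Gamma(H\mathbb Z,R)_\ast$ (whose $n$-simplices are the multiplicative maps $H\mathbb Z\to R_n$) by conjugation $(a\cdot\phi)(x)=a\,\phi(x)\,a^{-1}$. Then the homotopy orbit simplicial sets $FDL(R)_{hG_\ast}$ and $\Gamma(H\mathbb Z,R)_{hG_\ast}$ are isomorphic.
   Context: Let $[n]=\{0,1,\dots,n\}$, pointed at $0$. A $\Gamma$-space is a functor $F$ from the finite pointed sets $[n]$ (with pointed maps) to pointed simplicial sets with $F[0]$ a point; for a pointed map $f$ we write $f$ also for $F(f)$; $\Sigma_n$ acts on $F[n]$ via permutations of $\{1,\dots,n\}$. We identify $[n]\wedge[m]$ with $[nm]$ via $i\wedge j\mapsto (j-1)n+i$, so for $a\in R[1]$ and $x\in R(K)$ we have $ax, xa\in R(K)$. A $\Gamma$-ring is a $\Gamma$-space $R$ with unit $1\in R[1]$ and associative unital multiplication given by natural maps $R(K)\wedge R(L)\to R(K\wedge L)$, $p\wedge q\mapsto pq$; it is discrete if all $R(K)$ are sets; $0\in R[1]$ denotes the basepoint. For $x\in R[2]$, $x^k\in R[2^k]$ is the $k$-fold product. A multiplicative map of $\Gamma$-rings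 is a natural transformation preserving units and products. Maps: $p^n_i:[n]\to[n-1]$, $p^n_i(j)=j$ ($j<i$), $p^n_i(i)=0$, $p^n_i(j)=j-1$ ($j>i$); for $1\le i<j\le n$ and $1\le k\le n-1$, $s^n_{i,j,k}:[n]\to[n-1]$ sends $0\mapsto0$, $i,j\mapsto k$, and the remaining elements order-preservingly and bijectively onto $\{1,\dots,n-1\}\setminus\{k\}$; $d^n_j:[n-1]\to[n]$ is the order-preserving injection missing $j$. $H\mathbb{Z}$ is the $\Gamma$-ring with $H\mathbb{Z}(K)$ the reduced free abelian group on $K$, pointed maps acting by summing coefficients along fibres, unit the inclusion of generators, multiplication $(\sum a_k k)(\sum b_l l)=\sum a_kb_l (k\wedge l)$. For $k\ge1$, split $\{1,\dots,2^k\}=A_+\sqcup A_-$ where $i\in A_+$ iff the binary expansion of $i-1$ has an even number of digits $1$. The special action of $\Sigma_{2^{k-1}}\times\Sigma_{2^{k-1}}$ on $F[2^k]$ is the action of the group of permutations of $\{1,\dots,2^k\}$ preserving $A_+$ and $A_-$. Let $\sigma$ be the nontrivial element of $\Sigma_2$. A formal difference law in a discrete $\Gamma$-ring $R$ is $r\in R[2]$ such that: (1) $p^2_2(r)=1$ and $s^2_{1,2,1}(r)=0$; (2) $p^2_1(r)\,r=r\,p^2_1(r)=\sigma(r)$ in $R[2]$; (3) for every $k\ge1$, $r^k$ is fixed under the special action; (4) for every $k\ge1$, all $1\le i<j\le 2^k$ with one of $i,j$ in $A_+$ and the other in $A_-$, and all $1\le l\le 2^k-1$: $s^{2^k}_{i,j,l}(r^k)=d^{2^k-1}_l\,p^{2^k-1}_i\,p^{2^k}_j(r^k)$.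 *)

theory Defs
  imports Main
begin

text \<open>A simplicial set, given by its sets of n-simplices and face/degeneracy maps.
  sface X n i : X_n -> X_(n-1)  (1 <= n, i <= n);  sdeg X n i : X_n -> X_(n+1)  (i <= n).\<close>

record 'a sset =
  scar  :: "nat \<Rightarrow> 'a set"
  sface :: "nat \<Rightarrow> nat \<Rightarrow> 'a \<Rightarrow> 'a"
  sdeg  :: "nat \<Rightarrow> nat \<Rightarrow> 'a \<Rightarrow> 'a"

definition simplicial_set :: "'a sset \<Rightarrow> bool" where
  "simplicial_set X \<longleftrightarrow>
    (\<forall>n i x. 1 \<le> n \<and> i \<le> n \<and> x \<in> scar X n \<longrightarrow> sface X n i x \<in> scar X (n - 1)) \<and>
    (\<forall>n i x. i \<le> n \<and> x \<in> scar X n \<longrightarrow> sdeg X n i x \<in> scar X (Suc n)) \<and>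
    (\<forall>n i j x. 2 \<le> n \<and> i < j \<and> j \<le> n \<and> x \<in> scar X n \<longrightarrow>
       sface X (n - 1) i (sface X n j x) = sface X (n - 1) (j - 1) (sface X n i x)) \<and>
    (\<forall>n i j x. i \<le> j \<and> j \<le> n \<and> x \<in> scar X n \<longrightarrow>
       sdeg X (Suc n) i (sdeg X n j x) = sdeg X (Suc n) (Suc j) (sdeg X n i x)) \<and>
    (\<forall>n i j x. j \<le> n \<and> i \<le> Suc n \<and> x \<in> scar X n \<longrightarrow>
       sface X (Suc n) i (sdeg X n j x) =
         (if i < j then sdeg X (n - 1) (j - 1) (sface X n i x)
          else if i = j \<or> i = Suc j then x
          else sdeg X (n - 1) j (sface X n (i - 1) x)))"

definition sset_iso :: "'a sset \<Rightarrow> 'b sset \<Rightarrow> bool" where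
  "sset_iso X Y \<longleftrightarrow> (\<exists>f :: nat \<Rightarrow> 'a \<Rightarrow> 'b.
     (\<forall>n. bij_betw (f n) (scar X n) (scar Y n)) \<and>
     (\<forall>n i x. 1 \<le> n \<and> i \<le> n \<and> x \<in> scar X n \<longrightarrow>
        f (n - 1) (sface X n i x) = sface Y n i (f n x)) \<and>
     (\<forall>n i x. i \<le> n \<and> x \<in> scar X n \<longrightarrow>
        f (Suc n) (sdeg X n i x) = sdeg Y n i (f n x)))"

text \<open>gelts R m n = the set of n-simplices of R[m];
  gmap R m k f n : R[m]_n -> R[k]_n  for a pointed map f : [m] -> [k];
  gface R m n i, gdeg R m n i : faces/degeneracies of R[m];
  gbase R m n : basepoint of R[m]_n;  gone R n : the unit 1 in R[1]_n;
  gmul R m k n : R[m]_n x R[k]_n -> R[mk]_n  (levelwise smash product).\<close>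

record 'a gring =
  gelts :: "nat \<Rightarrow> nat \<Rightarrow> 'a set"
  gmap  :: "nat \<Rightarrow> nat \<Rightarrow> (nat \<Rightarrow> nat) \<Rightarrow> nat \<Rightarrow> 'a \<Rightarrow> 'a"
  gface :: "nat \<Rightarrow> nat \<Rightarrow> nat \<Rightarrow> 'a \<Rightarrow> 'a"
  gdeg  :: "nat \<Rightarrow> nat \<Rightarrow> nat \<Rightarrow> 'a \<Rightarrow> 'a"
  gbase :: "nat \<Rightarrow> nat \<Rightarrow> 'a"
  gone  :: "nat \<Rightarrow> 'a"
  gmul  :: "nat \<Rightarrow> nat \<Rightarrow> nat \<Rightarrow> 'a \<Rightarrow> 'a \<Rightarrow> 'a"

definition glevel :: "'a gring \<Rightarrow> nat \<Rightarrow> 'a sset" where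
  "glevel R m = \<lparr>scar = gelts R m, sface = gface R m, sdeg = gdeg R m\<rparr>"

text \<open>Pointed maps [m] -> [k] (only the values on {0..m} matter).\<close>

definition pointed_map :: "nat \<Rightarrow> nat \<Rightarrow> (nat \<Rightarrow> nat) \<Rightarrow> bool" where
  "pointed_map m k f \<longleftrightarrow> f 0 = 0 \<and> (\<forall>i\<le>m. f i \<le> k)"

text \<open>The smash f /\ g : [m] /\ [m'] -> [k] /\ [k'] under the identification
  [n] /\ [m] = [nm],  i /\ j |-> (j-1) n + i.\<close>

definition smash_map :: "nat \<Rightarrow> nat \<Rightarrow> nat \<Rightarrow> (nat \<Rightarrow> nat) \<Rightarrow> (nat \<Rightarrow> nat) \<Rightarrow> nat \<Rightarrow> nat" where
  "smash_map m m' k f g p =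
    (if p = 0 \<or> m * m' < p then 0
     else (let i = (p - 1) mod m + 1; j = (p - 1) div m + 1 in
           if f i = 0 \<or> g j = 0 then 0 else (g j - 1) * k + f i))"

definition is_gamma_ring :: "'a gring \<Rightarrow> bool" where
  "is_gamma_ring R \<longleftrightarrow>
    (\<forall>m. simplicial_set (glevel R m)) \<and>
    (\<forall>m n. gbase R m n \<in> gelts R m n) \<and>
    (\<forall>n. gelts R 0 n = {gbase R 0 n}) \<and>
    (\<forall>m n i. 1 \<le> n \<and> i \<le> n \<longrightarrow> gface R m n i (gbase R m n) = gbase R m (n - 1)) \<and>
    (\<forall>m n i. i \<le> n \<longrightarrow> gdeg R m n i (gbase R m n) = gbase R m (Suc n)) \<and>
    (\<forall>m k f n x. pointed_map m k f \<and> x \<in> gelts R m n \<longrightarrow> gmap R m k f n x \<in> gelts R k n) \<and>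
    (\<forall>m k f n. pointed_map m k f \<longrightarrow> gmap R m k f n (gbase R m n) = gbase R k n) \<and>
    (\<forall>m k f n i x. pointed_map m k f \<and> 1 \<le> n \<and> i \<le> n \<and> x \<in> gelts R m n \<longrightarrow>
        gface R k n i (gmap R m k f n x) = gmap R m k f (n - 1) (gface R m n i x)) \<and>
    (\<forall>m k f n i x. pointed_map m k f \<and> i \<le> n \<and> x \<in> gelts R m n \<longrightarrow>
        gdeg R k n i (gmap R m k f n x) = gmap R m k f (Suc n) (gdeg R m n i x)) \<and>
    (\<forall>m k f f' n x. (\<forall>i\<le>m. f i = f' i) \<and> x \<in> gelts R m n \<longrightarrow>
        gmap R m k f n x = gmap R m k f' n x) \<and>
    (\<forall>m n x. x \<in> gelts R m n \<longrightarrow> gmap R m m id n x = x) \<and>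
    (\<forall>m k l f g n x. pointed_map m k f \<and> pointed_map k l g \<and> x \<in> gelts R m n \<longrightarrow>
        gmap R k l g n (gmap R m k f n x) = gmap R m l (g \<circ> f) n x) \<and>
    (\<forall>m k n x y. x \<in> gelts R m n \<and> y \<in> gelts R k n \<longrightarrow> gmul R m k n x y \<in> gelts R (m * k) n) \<and>
    (\<forall>m k n y. y \<in> gelts R k n \<longrightarrow> gmul R m k n (gbase R m n) y = gbase R (m * k) n) \<and>
    (\<forall>m k n x. x \<in> gelts R m n \<longrightarrow> gmul R m k n x (gbase R k n) = gbase R (m * k) n) \<and>
    (\<forall>m k n i x y. 1 \<le> n \<and> i \<le> n \<and> x \<in> gelts R m n \<and> y \<in> gelts R k n \<longrightarrow>
        gface R (m * k) n i (gmul R m k n x y) = gmul R m k (n - 1) (gface R m n i x) (gface R k n i y)) \<and>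
    (\<forall>m k n i x y. i \<le> n \<and> x \<in> gelts R m n \<and> y \<in> gelts R k n \<longrightarrow>
        gdeg R (m * k) n i (gmul R m k n x y) = gmul R m k (Suc n) (gdeg R m n i x) (gdeg R k n i y)) \<and>
    (\<forall>m m' k k' f g n x y. pointed_map m m' f \<and> pointed_map k k' g \<and>
        x \<in> gelts R m n \<and> y \<in> gelts R k n \<longrightarrow>
        gmap R (m * k) (m' * k') (smash_map m k m' f g) n (gmul R m k n x y) =
        gmul R m' k' n (gmap R m m' f n x) (gmap R k k' g n y)) \<and>
    (\<forall>n. gone R n \<in> gelts R 1 n) \<and>
    (\<forall>n i. 1 \<le> n \<and> i \<le> n \<longrightarrow> gface R 1 n i (gone R n) = gone R (n - 1)) \<and>
    (\<forall>n i. i \<le> n \<longrightarrow> gdeg R 1 n i (gone R n) = gone R (Suc n)) \<and>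
    (\<forall>m n x. x \<in> gelts R m n \<longrightarrow> gmul R 1 m n (gone R n) x = x) \<and>
    (\<forall>m n x. x \<in> gelts R m n \<longrightarrow> gmul R m 1 n x (gone R n) = x) \<and>
    (\<forall>m k l n x y z. x \<in> gelts R m n \<and> y \<in> gelts R k n \<and> z \<in> gelts R l n \<longrightarrow>
        gmul R (m * k) l n (gmul R m k n x y) z = gmul R m (k * l) n x (gmul R k l n y z))"

text \<open>HZ[m] = reduced free abelian group on [m], i.e. functions nat => int supported in {1..m}.\<close>

definition hz_elts :: "nat \<Rightarrow> (nat \<Rightarrow> int) set" where
  "hz_elts m = {v. \<forall>i. (i = 0 \<or> m < i) \<longrightarrow> v i = 0}"

definition hz_map :: "nat \<Rightarrow> nat \<Rightarrow> (nat \<Rightarrow> nat) \<Rightarrow> (nat \<Rightarrow> int) \<Rightarrow> (nat \<Rightarrow> int)" where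
  "hz_map m k f v = (\<lambda>j. if 1 \<le> j \<and> j \<le> k then (\<Sum>i\<in>{i. 1 \<le> i \<and> i \<le> m \<and> f i = j}. v i) else 0)"

definition hz_mul :: "nat \<Rightarrow> nat \<Rightarrow> (nat \<Rightarrow> int) \<Rightarrow> (nat \<Rightarrow> int) \<Rightarrow> (nat \<Rightarrow> int)" where
  "hz_mul m k v w = (\<lambda>p. if 1 \<le> p \<and> p \<le> m * k then v ((p - 1) mod m + 1) * w ((p - 1) div m + 1) else 0)"

definition hz_one :: "nat \<Rightarrow> int" where
  "hz_one = (\<lambda>i. if i = 1 then 1 else 0)"

text \<open>Multiplicative maps HZ -> R_n (R_n the discrete Gamma-ring of n-simplices),
  as families phi m : HZ[m] -> R[m]_n (extensional: undefined off HZ[m]).\<close>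

definition mult_map :: "'a gring \<Rightarrow> nat \<Rightarrow> (nat \<Rightarrow> (nat \<Rightarrow> int) \<Rightarrow> 'a) \<Rightarrow> bool" where
  "mult_map R n \<phi> \<longleftrightarrow>
    (\<forall>m v. v \<in> hz_elts m \<longrightarrow> \<phi> m v \<in> gelts R m n) \<and>
    (\<forall>m v. v \<notin> hz_elts m \<longrightarrow> \<phi> m v = undefined) \<and>
    (\<forall>m. \<phi> m (\<lambda>_. 0) = gbase R m n) \<and>
    (\<forall>m k f v. pointed_map m k f \<and> v \<in> hz_elts m \<longrightarrow>
        \<phi> k (hz_map m k f v) = gmap R m k f n (\<phi> m v)) \<and>
    \<phi> 1 hz_one = gone R n \<and>
    (\<forall>m k v w. v \<in> hz_elts m \<and> w \<in> hz_elts k \<longrightarrow>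
        \<phi> (m * k) (hz_mul m k v w) = gmul R m k n (\<phi> m v) (\<phi> k w))"

definition hom_sset :: "'a gring \<Rightarrow> (nat \<Rightarrow> (nat \<Rightarrow> int) \<Rightarrow> 'a) sset" where
  "hom_sset R = \<lparr>scar = (\<lambda>n. {\<phi>. mult_map R n \<phi>}),
     sface = (\<lambda>n i \<phi>. (\<lambda>m v. if v \<in> hz_elts m then gface R m n i (\<phi> m v) else undefined)),
     sdeg = (\<lambda>n i \<phi>. (\<lambda>m v. if v \<in> hz_elts m then gdeg R m n i (\<phi> m v) else undefined))\<rparr>"

definition p_map :: "nat \<Rightarrow> nat \<Rightarrow> nat" where
  "p_map i = (\<lambda>j. if j < i then j else if j = i then 0 else j - 1)"

definition s_map :: "nat \<Rightarrow> nat \<Rightarrow> nat \<Rightarrow> nat \<Rightarrow> nat" where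
  "s_map i j k = (\<lambda>t. if t = 0 then 0 else if t = i \<or> t = j then k
     else (let r = t - (if i < t then 1 else 0) - (if j < t then 1 else 0)
           in if r < k then r else r + 1))"

definition d_map :: "nat \<Rightarrow> nat \<Rightarrow> nat" where
  "d_map l = (\<lambda>t. if t < l then t else t + 1)"

definition swap2 :: "nat \<Rightarrow> nat" where
  "swap2 = (\<lambda>t. if t = 1 then 2 else if t = 2 then 1 else t)"

fun bitcount :: "nat \<Rightarrow> nat" where
  "bitcount n = (if n = 0 then 0 else n mod 2 + bitcount (n div 2))"

definition in_Aplus :: "nat \<Rightarrow> bool" where
  "in_Aplus i \<longleftrightarrow> even (bitcount (i - 1))"

primrec rpow :: "'a gring \<Rightarrow> nat \<Rightarrow> 'a \<Rightarrow> nat \<Rightarrow> 'a" where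
  "rpow R n r 0 = gone R n"
| "rpow R n r (Suc k) = gmul R (2 ^ k) 2 n (rpow R n r k) r"

definition is_fdl :: "'a gring \<Rightarrow> nat \<Rightarrow> 'a \<Rightarrow> bool" where
  "is_fdl R n r \<longleftrightarrow> r \<in> gelts R 2 n \<and>
    gmap R 2 1 (p_map 2) n r = gone R n \<and>
    gmap R 2 1 (s_map 1 2 1) n r = gbase R 1 n \<and>
    gmul R 1 2 n (gmap R 2 1 (p_map 1) n r) r = gmap R 2 2 swap2 n r \<and>
    gmul R 2 1 n r (gmap R 2 1 (p_map 1) n r) = gmap R 2 2 swap2 n r \<and>
    (\<forall>k \<pi>. 1 \<le> k \<and> \<pi> 0 = 0 \<and> bij_betw \<pi> {1..2 ^ k} {1..2 ^ k} \<and>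
        (\<forall>i\<in>{1..2 ^ k}. in_Aplus (\<pi> i) = in_Aplus i) \<longrightarrow>
        gmap R (2 ^ k) (2 ^ k) \<pi> n (rpow R n r k) = rpow R n r k) \<and>
    (\<forall>k i j l. 1 \<le> k \<and> 1 \<le> i \<and> i < j \<and> j \<le> 2 ^ k \<and> in_Aplus i \<noteq> in_Aplus j \<and>
        1 \<le> l \<and> l \<le> 2 ^ k - 1 \<longrightarrow>
        gmap R (2 ^ k) (2 ^ k - 1) (s_map i j l) n (rpow R n r k) =
        gmap R (2 ^ k - 2) (2 ^ k - 1) (d_map l) n
          (gmap R (2 ^ k - 1) (2 ^ k - 2) (p_map i) n
            (gmap R (2 ^ k) (2 ^ k - 1) (p_map j) n (rpow R n r k))))"

definition fdl_sset :: "'a gring \<Rightarrow> 'a sset" where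
  "fdl_sset R = \<lparr>scar = (\<lambda>n. {r. is_fdl R n r}), sface = gface R 2, sdeg = gdeg R 2\<rparr>"

definition units :: "'a gring \<Rightarrow> nat \<Rightarrow> 'a set" where
  "units R n = {a \<in> gelts R 1 n. \<exists>b\<in>gelts R 1 n.
      gmul R 1 1 n a b = gone R n \<and> gmul R 1 1 n b a = gone R n}"

definition ginv :: "'a gring \<Rightarrow> nat \<Rightarrow> 'a \<Rightarrow> 'a" where
  "ginv R n a = (THE b. b \<in> gelts R 1 n \<and> gmul R 1 1 n a b = gone R n \<and> gmul R 1 1 n b a = gone R n)"

definition unit_group :: "'a gring \<Rightarrow> 'a sset" where
  "unit_group R = \<lparr>scar = units R, sface = gface R 1, sdeg = gdeg R 1\<rparr>"

definition fdl_act :: "'a gring \<Rightarrow> nat \<Rightarrow> 'a \<Rightarrow> 'a \<Rightarrow> 'a" where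
  "fdl_act R n a r = gmul R 2 1 n (gmul R 1 2 n a r) (ginv R n a)"

definition hom_act :: "'a gring \<Rightarrow> nat \<Rightarrow> 'a \<Rightarrow> (nat \<Rightarrow> (nat \<Rightarrow> int) \<Rightarrow> 'a) \<Rightarrow> (nat \<Rightarrow> (nat \<Rightarrow> int) \<Rightarrow> 'a)" where
  "hom_act R n a \<phi> = (\<lambda>m v. if v \<in> hz_elts m
      then gmul R m 1 n (gmul R 1 m n a (\<phi> m v)) (ginv R n a) else undefined)"

text \<open>X_hG := diagonal of the bisimplicial bar construction B(*, G, X):
  n-simplices (g_1,...,g_n; x) with g_i in G_n, x in X_n;
  d_0 drops g_1, d_i (0<i<n) multiplies g_i g_(i+1), d_n acts by g_n on x
  (after applying the simplicial face d_i to all entries); s_i inserts 1.\<close>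

definition hoorb :: "'b sset \<Rightarrow> 'g sset \<Rightarrow> (nat \<Rightarrow> 'g \<Rightarrow> 'g \<Rightarrow> 'g) \<Rightarrow> (nat \<Rightarrow> 'g)
    \<Rightarrow> (nat \<Rightarrow> 'g \<Rightarrow> 'b \<Rightarrow> 'b) \<Rightarrow> ('g list \<times> 'b) sset" where
  "hoorb X G gm ge act = \<lparr>
     scar = (\<lambda>n. {(gs, x). length gs = n \<and> set gs \<subseteq> scar G n \<and> x \<in> scar X n}),
     sface = (\<lambda>n i (gs, x). (let hs = map (sface G n i) gs; y = sface X n i x in
        if i = 0 then (tl hs, y)
        else if i = n then (butlast hs, act (n - 1) (last hs) y)
        else (take (i - 1) hs @ [gm (n - 1) (hs ! (i - 1)) (hs ! i)] @ drop (i + 1) hs, y))),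
     sdeg = (\<lambda>n i (gs, x). (let hs = map (sdeg G n i) gs in
        (take i hs @ [ge (Suc n)] @ drop i hs, sdeg X n i x)))\<rparr>"

definition hG :: "'a gring \<Rightarrow> 'b sset \<Rightarrow> (nat \<Rightarrow> 'a \<Rightarrow> 'b \<Rightarrow> 'b) \<Rightarrow> ('a list \<times> 'b) sset" where
  "hG R X act = hoorb X (unit_group R) (\<lambda>n. gmul R 1 1 n) (gone R) act"

end

theory Submission
  imports Defs
begin


locale GR = fixes R :: "'a gring" assumes gr: "is_gamma_ring R"
begin

lemmas GS = gr[unfolded is_gamma_ring_def]
lemmas G0 = GS[THEN conjunct1]
lemmas G1 = GS[THEN conjunct2, THEN conjunct1]
lemmas G2 = GS[THEN conjunct2, THEN conjunct2, THEN conjunct1]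
lemmas G3 = GS[THEN conjunct2, THEN conjunct2, THEN conjunct2, THEN conjunct1]
lemmas G4 = GS[THEN conjunct2, THEN conjunct2, THEN conjunct2, THEN conjunct2, THEN conjunct1]
lemmas G5 = GS[THEN conjunct2, THEN conjunct2, THEN conjunct2, THEN conjunct2, THEN conjunct2, THEN conjunct1]
lemmas G6 = GS[THEN conjunct2, THEN conjunct2, THEN conjunct2, THEN conjunct2, THEN conjunct2, THEN conjunct2, THEN conjunct1]
lemmas G7 = GS[THEN conjunct2, THEN conjunct2, THEN conjunct2, THEN conjunct2, THEN conjunct2, THEN conjunct2, THEN conjunct2, THEN conjunct1]
lemmas G8 = GS[THEN conjunct2, THEN conjunct2, THEN conjunct2, THEN conjunct2, THEN conjunct2, THEN conjunct2, THEN conjunct2, THEN conjunct2, THEN conjunct1]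
lemmas G9 = GS[THEN conjunct2, THEN conjunct2, THEN conjunct2, THEN conjunct2, THEN conjunct2, THEN conjunct2, THEN conjunct2, THEN conjunct2, THEN conjunct2, THEN conjunct1]
lemmas G10 = GS[THEN conjunct2, THEN conjunct2, THEN conjunct2, THEN conjunct2, THEN conjunct2, THEN conjunct2, THEN conjunct2, THEN conjunct2, THEN conjunct2, THEN conjunct2, THEN conjunct1]
lemmas G11 = GS[THEN conjunct2, THEN conjunct2, THEN conjunct2, THEN conjunct2, THEN conjunct2, THEN conjunct2, THEN conjunct2, THEN conjunct2, THEN conjunct2, THEN conjunct2, THEN conjunct2, THEN conjunct1]
lemmas G12 = GS[THEN conjunct2, THEN conjunct2, THEN conjunct2, THEN conjunct2, THEN conjunct2, THEN conjunct2, THEN conjunct2, THEN conjunct2, THEN conjunct2, THEN conjunct2, THEN conjunct2, THEN conjunct2, THEN conjunct1]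
lemmas G13 = GS[THEN conjunct2, THEN conjunct2, THEN conjunct2, THEN conjunct2, THEN conjunct2, THEN conjunct2, THEN conjunct2, THEN conjunct2, THEN conjunct2, THEN conjunct2, THEN conjunct2, THEN conjunct2, THEN conjunct2, THEN conjunct1]
lemmas G14 = GS[THEN conjunct2, THEN conjunct2, THEN conjunct2, THEN conjunct2, THEN conjunct2, THEN conjunct2, THEN conjunct2, THEN conjunct2, THEN conjunct2, THEN conjunct2, THEN conjunct2, THEN conjunct2, THEN conjunct2, THEN conjunct2, THEN conjunct1]
lemmas G15 = GS[THEN conjunct2, THEN conjunct2, THEN conjunct2, THEN conjunct2, THEN conjunct2, THEN conjunct2, THEN conjunct2, THEN conjunct2, THEN conjunct2, THEN conjunct2, THEN conjunct2, THEN conjunct2, THEN conjunct2, THEN conjunct2, THEN conjunct2, THEN conjunct1]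
lemmas G16 = GS[THEN conjunct2, THEN conjunct2, THEN conjunct2, THEN conjunct2, THEN conjunct2, THEN conjunct2, THEN conjunct2, THEN conjunct2, THEN conjunct2, THEN conjunct2, THEN conjunct2, THEN conjunct2, THEN conjunct2, THEN conjunct2, THEN conjunct2, THEN conjunct2, THEN conjunct1]
lemmas G17 = GS[THEN conjunct2, THEN conjunct2, THEN conjunct2, THEN conjunct2, THEN conjunct2, THEN conjunct2, THEN conjunct2, THEN conjunct2, THEN conjunct2, THEN conjunct2, THEN conjunct2, THEN conjunct2, THEN conjunct2, THEN conjunct2, THEN conjunct2, THEN conjunct2, THEN conjunct2, THEN conjunct1]
lemmas G18 = GS[THEN conjunct2, THEN conjunct2, THEN conjunct2, THEN conjunct2, THEN conjunct2, THEN conjunct2, THEN conjunct2, THEN conjunct2, THEN conjunct2, THEN conjunct2, THEN conjunct2, THEN conjunct2, THEN conjunct2, THEN conjunct2, THEN conjunct2, THEN conjunct2, THEN conjunct2, THEN conjunct2, THEN conjunct1]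
lemmas G19 = GS[THEN conjunct2, THEN conjunct2, THEN conjunct2, THEN conjunct2, THEN conjunct2, THEN conjunct2, THEN conjunct2, THEN conjunct2, THEN conjunct2, THEN conjunct2, THEN conjunct2, THEN conjunct2, THEN conjunct2, THEN conjunct2, THEN conjunct2, THEN conjunct2, THEN conjunct2, THEN conjunct2, THEN conjunct2, THEN conjunct1]
lemmas G20 = GS[THEN conjunct2, THEN conjunct2, THEN conjunct2, THEN conjunct2, THEN conjunct2, THEN conjunct2, THEN conjunct2, THEN conjunct2, THEN conjunct2, THEN conjunct2, THEN conjunct2, THEN conjunct2, THEN conjunct2, THEN conjunct2, THEN conjunct2, THEN conjunct2, THEN conjunct2, THEN conjunct2, THEN conjunct2, THEN conjunct2, THEN conjunct1]
lemmas G21 = GS[THEN conjunct2, THEN conjunct2, THEN conjunct2, THEN conjunct2, THEN conjunct2, THEN conjunct2, THEN conjunct2, THEN conjunct2, THEN conjunct2, THEN conjunct2, THEN conjunct2, THEN conjunct2, THEN conjunct2, THEN conjunct2, THEN conjunct2, THEN conjunct2, THEN conjunct2, THEN conjunct2, THEN conjunct2, THEN conjunct2, THEN conjunct2, THEN conjunct1]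
lemmas G22 = GS[THEN conjunct2, THEN conjunct2, THEN conjunct2, THEN conjunct2, THEN conjunct2, THEN conjunct2, THEN conjunct2, THEN conjunct2, THEN conjunct2, THEN conjunct2, THEN conjunct2, THEN conjunct2, THEN conjunct2, THEN conjunct2, THEN conjunct2, THEN conjunct2, THEN conjunct2, THEN conjunct2, THEN conjunct2, THEN conjunct2, THEN conjunct2, THEN conjunct2, THEN conjunct1]
lemmas G23 = GS[THEN conjunct2, THEN conjunct2, THEN conjunct2, THEN conjunct2, THEN conjunct2, THEN conjunct2, THEN conjunct2, THEN conjunct2, THEN conjunct2, THEN conjunct2, THEN conjunct2, THEN conjunct2, THEN conjunct2, THEN conjunct2, THEN conjunct2, THEN conjunct2, THEN conjunct2, THEN conjunct2, THEN conjunct2, THEN conjunct2, THEN conjunct2, THEN conjunct2, THEN conjunct2]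

lemma face_in: "1 \<le> n \<Longrightarrow> i \<le> n \<Longrightarrow> x \<in> gelts R m n \<Longrightarrow> gface R m n i x \<in> gelts R m (n - 1)"
  using G0 unfolding simplicial_set_def glevel_def by auto
lemma deg_in: "i \<le> n \<Longrightarrow> x \<in> gelts R m n \<Longrightarrow> gdeg R m n i x \<in> gelts R m (Suc n)"
  using G0 unfolding simplicial_set_def glevel_def by auto
lemma base_in: "gbase R m n \<in> gelts R m n" using G1 by blast
lemma elts0: "gelts R 0 n = {gbase R 0 n}" using G2 by blast
lemma face_base: "1 \<le> n \<Longrightarrow> i \<le> n \<Longrightarrow> gface R m n i (gbase R m n) = gbase R m (n - 1)" using G3 by blast
lemma deg_base: "i \<le> n \<Longrightarrow> gdeg R m n i (gbase R m n) = gbase R m (Suc n)" using G4 by blast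
lemma gmap_in: "pointed_map m k f \<Longrightarrow> x \<in> gelts R m n \<Longrightarrow> gmap R m k f n x \<in> gelts R k n" using G5 by blast
lemma gmap_base: "pointed_map m k f \<Longrightarrow> gmap R m k f n (gbase R m n) = gbase R k n" using G6 by blast
lemma face_gmap: "pointed_map m k f \<Longrightarrow> 1 \<le> n \<Longrightarrow> i \<le> n \<Longrightarrow> x \<in> gelts R m n \<Longrightarrow>
        gface R k n i (gmap R m k f n x) = gmap R m k f (n - 1) (gface R m n i x)" using G7 by blast
lemma deg_gmap: "pointed_map m k f \<Longrightarrow> i \<le> n \<Longrightarrow> x \<in> gelts R m n \<Longrightarrow>
        gdeg R k n i (gmap R m k f n x) = gmap R m k f (Suc n) (gdeg R m n i x)" using G8 by blast
lemma gmap_cong: "(\<And>i. i \<le> m \<Longrightarrow> f i = f' i) \<Longrightarrow> x \<in> gelts R m n \<Longrightarrow>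
        gmap R m k f n x = gmap R m k f' n x" using G9 by blast
lemma gmap_id: "x \<in> gelts R m n \<Longrightarrow> gmap R m m id n x = x" using G10 by blast
lemma gmap_comp: "pointed_map m k f \<Longrightarrow> pointed_map k l g \<Longrightarrow> x \<in> gelts R m n \<Longrightarrow>
        gmap R k l g n (gmap R m k f n x) = gmap R m l (g \<circ> f) n x" using G11 by blast
lemma gmul_in: "x \<in> gelts R m n \<Longrightarrow> y \<in> gelts R k n \<Longrightarrow> gmul R m k n x y \<in> gelts R (m * k) n" using G12 by blast
lemma gmul_base_l: "y \<in> gelts R k n \<Longrightarrow> gmul R m k n (gbase R m n) y = gbase R (m * k) n" using G13 by blast
lemma gmul_base_r: "x \<in> gelts R m n \<Longrightarrow> gmul R m k n x (gbase R k n) = gbase R (m * k) n" using G14 by blast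
lemma face_gmul: "1 \<le> n \<Longrightarrow> i \<le> n \<Longrightarrow> x \<in> gelts R m n \<Longrightarrow> y \<in> gelts R k n \<Longrightarrow>
        gface R (m * k) n i (gmul R m k n x y) = gmul R m k (n - 1) (gface R m n i x) (gface R k n i y)" using G15 by blast
lemma deg_gmul: "i \<le> n \<Longrightarrow> x \<in> gelts R m n \<Longrightarrow> y \<in> gelts R k n \<Longrightarrow>
        gdeg R (m * k) n i (gmul R m k n x y) = gmul R m k (Suc n) (gdeg R m n i x) (gdeg R k n i y)" using G16 by blast
lemma gmul_smash: "pointed_map m m' f \<Longrightarrow> pointed_map k k' g \<Longrightarrow>
        x \<in> gelts R m n \<Longrightarrow> y \<in> gelts R k n \<Longrightarrow>
        gmap R (m * k) (m' * k') (smash_map m k m' f g) n (gmul R m k n x y) =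
        gmul R m' k' n (gmap R m m' f n x) (gmap R k k' g n y)" using G17 by blast
lemma one_in: "gone R n \<in> gelts R 1 n" using G18 by blast
lemma face_one: "1 \<le> n \<Longrightarrow> i \<le> n \<Longrightarrow> gface R 1 n i (gone R n) = gone R (n - 1)" using G19 by blast
lemma deg_one: "i \<le> n \<Longrightarrow> gdeg R 1 n i (gone R n) = gone R (Suc n)" using G20 by blast
lemma one_l: "x \<in> gelts R m n \<Longrightarrow> gmul R 1 m n (gone R n) x = x" using G21 by blast
lemma one_r: "x \<in> gelts R m n \<Longrightarrow> gmul R m 1 n x (gone R n) = x" using G22 by blast
lemma assoc: "x \<in> gelts R m n \<Longrightarrow> y \<in> gelts R k n \<Longrightarrow> z \<in> gelts R l n \<Longrightarrow>
        gmul R (m * k) l n (gmul R m k n x y) z = gmul R m (k * l) n x (gmul R k l n y z)" using G23 by blast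

end



definition sgnv :: "nat \<Rightarrow> nat \<Rightarrow> int" where
  "sgnv k = (\<lambda>p. if 1 \<le> p \<and> p \<le> 2 ^ k then (if in_Aplus p then 1 else -1) else 0)"

lemma fib_fin[simp]: "finite {i. 1 \<le> i \<and> i \<le> (m::nat) \<and> P i}"
  by (rule finite_subset[of _ "{..m}"]) auto

lemma hz_map_in: "hz_map m k f v \<in> hz_elts k"
  unfolding hz_map_def hz_elts_def by auto

lemma hz_mul_in: "hz_mul m k v w \<in> hz_elts (m * k)"
  unfolding hz_mul_def hz_elts_def by auto

lemma sgn_in: "sgnv k \<in> hz_elts (2 ^ k)"
  unfolding sgnv_def hz_elts_def by auto

lemma hz_map_out: "\<not> (1 \<le> j \<and> j \<le> k) \<Longrightarrow> hz_map m k f v j = 0"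
  unfolding hz_map_def by auto

lemma hz_map_cong: "(\<And>i. i \<le> m \<Longrightarrow> f i = f' i) \<Longrightarrow> hz_map m k f v = hz_map m k f' v"
  unfolding hz_map_def by (intro ext) (auto intro!: sum.cong)

lemma hz_map_vcong: "(\<And>i. 1 \<le> i \<Longrightarrow> i \<le> m \<Longrightarrow> v i = v' i) \<Longrightarrow> hz_map m k f v = hz_map m k f v'"
  unfolding hz_map_def by (intro ext) (auto intro!: sum.cong)

lemma hz_map_zero: "hz_map m k f (\<lambda>_. 0) = (\<lambda>_. 0)"
  unfolding hz_map_def by auto

lemma hz_map_const0: "hz_map m k (\<lambda>_. 0) v = (\<lambda>_. 0)"
  unfolding hz_map_def by auto

lemma hz_map_id: "v \<in> hz_elts m \<Longrightarrow> hz_map m m id v = v"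
proof (rule ext)
  fix j assume v: "v \<in> hz_elts m"
  show "hz_map m m id v j = v j"
  proof (cases "1 \<le> j \<and> j \<le> m")
    case True
    then have "{i. 1 \<le> i \<and> i \<le> m \<and> id i = j} = {j}" by auto
    then show ?thesis using True unfolding hz_map_def by simp
  next
    case False then show ?thesis using v unfolding hz_map_def hz_elts_def
      by (cases "j = 0") auto
  qed
qed

lemma hz_map_comp:
  assumes f: "pointed_map m k f" and g: "pointed_map k l g"
  shows "hz_map k l g (hz_map m k f v) = hz_map m l (g \<circ> f) v"
proof (rule ext)
  fix j
  show "hz_map k l g (hz_map m k f v) j = hz_map m l (g \<circ> f) v j"
  proof (cases "1 \<le> j \<and> j \<le> l")
    case False then show ?thesis unfolding hz_map_def by presburger
  next
    case True
    let ?S = "{i. 1 \<le> i \<and> i \<le> m \<and> (g \<circ> f) i = j}"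
    let ?T = "{y. 1 \<le> y \<and> y \<le> k \<and> g y = j}"
    have img: "f ` ?S \<subseteq> ?T"
    proof
      fix y assume "y \<in> f ` ?S"
      then obtain i where i: "i \<in> ?S" "y = f i" by auto
      have "f i \<noteq> 0" using i True g unfolding pointed_map_def by (metis (mono_tags, lifting) comp_apply mem_Collect_eq not_one_le_zero)
      then show "y \<in> ?T" using i f unfolding pointed_map_def by auto
    qed
    have "hz_map k l g (hz_map m k f v) j = (\<Sum>y\<in>?T. hz_map m k f v y)"
      using True unfolding hz_map_def by simp
    also have "\<dots> = (\<Sum>y\<in>?T. sum v {x. x \<in> ?S \<and> f x = y})"
      unfolding hz_map_def by (intro sum.cong) (auto intro!: sum.cong)
    also have "\<dots> = sum v ?S"
      by (rule sum.group) (use img in auto)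
    also have "\<dots> = hz_map m l (g \<circ> f) v j" using True unfolding hz_map_def by simp
    finally show ?thesis .
  qed
qed

declare bitcount.simps[simp del]

lemma bc0: "bitcount 0 = 0" by (subst bitcount.simps) simp

lemma bc_step: "bitcount x = x mod 2 + bitcount (x div 2)"
  by (cases "x = 0") (simp_all add: bc0, subst bitcount.simps, simp)

lemma bc2: "b < 2 \<Longrightarrow> bitcount (b + 2 * y) = b + bitcount y"
  by (subst bc_step) auto

lemma bc_split: "bitcount x = bitcount (x mod 2 ^ a) + bitcount (x div 2 ^ a)"
proof (induction a arbitrary: x)
  case 0 then show ?case by (simp add: bitcount.simps)
next
  case (Suc a)
  have m: "x mod 2 ^ Suc a = x mod 2 + 2 * ((x div 2) mod 2 ^ a)"
    by (simp add: mod_mult2_eq mult.commute)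
  have d: "x div 2 ^ Suc a = (x div 2) div 2 ^ a"
    by (simp add: div_mult2_eq)
  have "bitcount x = x mod 2 + bitcount (x div 2)" by (rule bc_step)
  also have "\<dots> = x mod 2 + bitcount ((x div 2) mod 2 ^ a) + bitcount ((x div 2) div 2 ^ a)"
    using Suc[of "x div 2"] by simp
  also have "\<dots> = bitcount (x mod 2 ^ Suc a) + bitcount (x div 2 ^ Suc a)"
    unfolding m d by (subst bc2) auto
  finally show ?case .
qed

lemma bc_pow_m1: "bitcount (2 ^ j - 1) = j"
proof (induction j)
  case 0 then show ?case by (simp add: bitcount.simps)
next
  case (Suc j)
  have "(2::nat) ^ Suc j - 1 = 1 + 2 * (2 ^ j - 1)"
  proof -
    have "(1::nat) \<le> 2 ^ j" by simp
    then show ?thesis by (simp only: power_Suc)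
  qed
  then show ?case using Suc bc2[of 1 "2 ^ j - 1"] by simp
qed

lemma bc_pow_m2: "bitcount (2 ^ Suc j - 2) = j"
proof -
  have "(2::nat) ^ Suc j - 2 = 0 + 2 * (2 ^ j - 1)" by (simp add: algebra_simps right_diff_distrib')
  then show ?thesis using bc_pow_m1[of j] bc2[of 0 "2 ^ j - 1"] by simp
qed

lemma sgn_mul: "hz_mul (2 ^ a) (2 ^ b) (sgnv a) (sgnv b) = sgnv (a + b)"
proof (rule ext)
  fix p :: nat
  show "hz_mul (2 ^ a) (2 ^ b) (sgnv a) (sgnv b) p = sgnv (a + b) p"
  proof (cases "1 \<le> p \<and> p \<le> 2 ^ a * 2 ^ b")
    case False then show ?thesis unfolding hz_mul_def sgnv_def by (auto simp: power_add)
  next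
    case True
    let ?x = "p - 1"
    have lt: "?x < 2 ^ a * 2 ^ b" using True by auto
    have r1: "1 \<le> ?x mod 2 ^ a + 1 \<and> ?x mod 2 ^ a + 1 \<le> 2 ^ a"
      by (simp add: Suc_leI)
    have r2: "1 \<le> ?x div 2 ^ a + 1 \<and> ?x div 2 ^ a + 1 \<le> 2 ^ b"
      using lt by (simp add: Suc_leI less_mult_imp_div_less mult.commute)
    have bc: "bitcount ?x = bitcount (?x mod 2 ^ a) + bitcount (?x div 2 ^ a)" by (rule bc_split)
    show ?thesis using True r1 r2 bc unfolding hz_mul_def sgnv_def in_Aplus_def
      by (auto simp: power_add)
  qed
qed

lemma sgn0: "sgnv 0 = hz_one"
  unfolding sgnv_def hz_one_def in_Aplus_def by (auto simp: bitcount.simps)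

lemma sgn_range: "\<not> (1 \<le> p \<and> p \<le> 2 ^ k) \<Longrightarrow> sgnv k p = 0" unfolding sgnv_def by auto
lemma sgn_val: "1 \<le> p \<Longrightarrow> p \<le> 2 ^ k \<Longrightarrow> sgnv k p = (if in_Aplus p then 1 else -1)" unfolding sgnv_def by auto

lemma decode:
  assumes "1 \<le> a" "a \<le> (M::nat)"
  shows "(c * M + a - 1) mod M + 1 = a" "(c * M + a - 1) div M = c"
proof -
  have e: "c * M + a - 1 = (a - 1) + c * M" using assms by auto
  have l: "a - 1 < M" using assms by auto
  have "((a - 1) + c * M) mod M = a - 1" using l by (simp add: mod_mult_self2)
  then show "(c * M + a - 1) mod M + 1 = a" unfolding e using assms by simp
  have "((a - 1) + c * M) div M = c" using l by (simp add: div_mult_self2)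
  then show "(c * M + a - 1) div M = c" unfolding e .
qed


lemma div_bound: "1 \<le> p \<Longrightarrow> p \<le> a * b \<Longrightarrow> (p - 1) div a + 1 \<le> (b::nat)"
proof -
  assume "1 \<le> p" "p \<le> a * b"
  then have "p - 1 < b * a" by (simp add: mult.commute)
  then have "(p - 1) div a < b" by (rule less_mult_imp_div_less)
  then show ?thesis by simp
qed

lemma mod_bound: "0 < (a::nat) \<Longrightarrow> 1 \<le> (p - 1) mod a + 1 \<and> (p - 1) mod a + 1 \<le> a"
  by (simp add: Suc_leI)

lemma enc_bound: "1 \<le> i \<Longrightarrow> i \<le> m \<Longrightarrow> 1 \<le> j \<Longrightarrow> j \<le> (k::nat) \<Longrightarrow> 1 \<le> (j - 1) * m + i \<and> (j - 1) * m + i \<le> m * k"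
proof -
  assume a: "1 \<le> i" "i \<le> m" "1 \<le> j" "j \<le> k"
  have "(j - 1) * m \<le> (k - 1) * m" using a by simp
  then have "(j - 1) * m + i \<le> (k - 1) * m + m" using a by linarith
  also have "\<dots> = k * m" using a by (cases k) auto
  finally show ?thesis using a by (simp add: mult.commute)
qed

lemma hz_mul_smash:
  assumes f: "pointed_map m m' f" and g: "pointed_map k k' g"
  shows "hz_map (m * k) (m' * k') (smash_map m k m' f g) (hz_mul m k v w) =
         hz_mul m' k' (hz_map m m' f v) (hz_map k k' g w)"
proof (rule ext)
  fix p
  show "hz_map (m * k) (m' * k') (smash_map m k m' f g) (hz_mul m k v w) p =
         hz_mul m' k' (hz_map m m' f v) (hz_map k k' g w) p"
  proof (cases "1 \<le> p \<and> p \<le> m' * k'")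
    case False then show ?thesis unfolding hz_map_def hz_mul_def by auto
  next
    case True
    define ip where "ip = (p - 1) mod m' + 1"
    define jp where "jp = (p - 1) div m' + 1"
    have m'pos: "m' > 0" using True by (cases "m' = 0") auto
    have ipr: "1 \<le> ip \<and> ip \<le> m'" unfolding ip_def using m'pos by (rule mod_bound)
    have jpr: "1 \<le> jp \<and> jp \<le> k'" unfolding jp_def using True div_bound[of p m' k'] by simp
    have pdec: "p = (jp - 1) * m' + ip" unfolding ip_def jp_def using True
      by simp
    let ?A = "{i. 1 \<le> i \<and> i \<le> m \<and> f i = ip}"
    let ?B = "{j. 1 \<le> j \<and> j \<le> k \<and> g j = jp}"
    let ?Q = "{q. 1 \<le> q \<and> q \<le> m * k \<and> smash_map m k m' f g q = p}"
    have Qdec: "((q - 1) mod m + 1, (q - 1) div m + 1) \<in> ?A \<times> ?B \<and>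
        ((q - 1) div m) * m + (q - 1) mod m + 1 = q" if a: "q \<in> ?Q" for q
    proof -
      have mpos: "m > 0" using a by (cases "m = 0") auto
      have a1: "1 \<le> q" "q \<le> m * k" using a by auto
      have e: "((q - 1) div m) * m + (q - 1) mod m + 1 = q" using a1 by simp
      let ?ia = "(q - 1) mod m + 1" and ?ja = "(q - 1) div m + 1"
      have iar: "1 \<le> ?ia \<and> ?ia \<le> m" using mpos by (rule mod_bound)
      have jar: "1 \<le> ?ja \<and> ?ja \<le> k" using a1 div_bound[of q m k] by simp
      have sm: "smash_map m k m' f g q = p" using a by auto
      have nz: "f ?ia \<noteq> 0" "g ?ja \<noteq> 0" and eq: "(g ?ja - 1) * m' + f ?ia = p"
        using sm True a1 unfolding smash_map_def Let_def by (auto split: if_splits)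
      have fr: "1 \<le> f ?ia \<and> f ?ia \<le> m'" using nz f iar unfolding pointed_map_def by auto
      have d: "(((g ?ja - 1) * m' + f ?ia) - 1) mod m' + 1 = f ?ia"
              "(((g ?ja - 1) * m' + f ?ia) - 1) div m' = g ?ja - 1"
        using decode[of "f ?ia" m' "g ?ja - 1"] fr by auto
      have "f ?ia = ip" using d(1) eq unfolding ip_def by simp
      moreover have "g ?ja - 1 = jp - 1" using d(2) eq unfolding jp_def by simp
      then have "g ?ja = jp" using nz jpr by auto
      ultimately show ?thesis using iar jar e by auto
    qed
    have ABenc: "(j - 1) * m + i \<in> ?Q \<and> ((j - 1) * m + i - 1) mod m + 1 = i \<and>
        ((j - 1) * m + i - 1) div m + 1 = j" if b: "(i, j) \<in> ?A \<times> ?B" for i j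
    proof -
      have i: "1 \<le> i" "i \<le> m" "f i = ip" and j: "1 \<le> j" "j \<le> k" "g j = jp" using b by auto
      have di: "((j - 1) * m + i - 1) mod m + 1 = i" "((j - 1) * m + i - 1) div m = j - 1"
        using decode[OF i(1) i(2)] by auto
      have r: "1 \<le> (j - 1) * m + i \<and> (j - 1) * m + i \<le> m * k" using enc_bound[OF i(1,2) j(1,2)] .
      have "smash_map m k m' f g ((j - 1) * m + i) = p"
        unfolding smash_map_def Let_def using r di i j ipr jpr pdec by auto
      then show ?thesis using r di j by auto
    qed
    have rhs: "hz_mul m' k' (hz_map m m' f v) (hz_map k k' g w) p = sum v ?A * sum w ?B"
      using True ipr jpr unfolding hz_mul_def hz_map_def ip_def jp_def by simp
    also have "\<dots> = (\<Sum>(i, j)\<in>?A \<times> ?B. v i * w j)"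
      by (simp add: sum_product sum.cartesian_product)
    also have "\<dots> = (\<Sum>q\<in>?Q. v ((q - 1) mod m + 1) * w ((q - 1) div m + 1))"
      by (rule sum.reindex_bij_witness[where i = "\<lambda>q. ((q - 1) mod m + 1, (q - 1) div m + 1)"
          and j = "\<lambda>(i, j). (j - 1) * m + i"]) (use Qdec ABenc in auto)
    also have "\<dots> = hz_map (m * k) (m' * k') (smash_map m k m' f g) (hz_mul m k v w) p"
      using True unfolding hz_map_def hz_mul_def by (auto intro!: sum.cong)
    finally show ?thesis by simp
  qed
qed


lemma hz_map_kill:
  assumes agree: "\<And>x. x \<noteq> i \<Longrightarrow> x \<noteq> j \<Longrightarrow> f' x = f x"
    and z: "f' i = 0" "f' j = 0" and fij: "f i = f j" and ij: "i \<noteq> j"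
    and ir: "1 \<le> i" "i \<le> m" and jr: "1 \<le> j" "j \<le> m" and vs: "v i + v j = 0"
  shows "hz_map m k f v = hz_map m k f' v"
proof (rule ext)
  fix t
  show "hz_map m k f v t = hz_map m k f' v t"
  proof (cases "1 \<le> t \<and> t \<le> k")
    case False then show ?thesis by (simp only: hz_map_def False if_False)
  next
    case True
    let ?S = "{x. 1 \<le> x \<and> x \<le> m \<and> f x = t}" and ?S' = "{x. 1 \<le> x \<and> x \<le> m \<and> f' x = t}"
    have i': "i \<notin> ?S'" "j \<notin> ?S'" using z True by auto
    show ?thesis
    proof (cases "f i = t")
      case False
      have "?S = ?S'"
      proof (intro set_eqI iffI)
        fix x assume x: "x \<in> ?S"
        then have "x \<noteq> i" "x \<noteq> j" using False fij by auto
        then show "x \<in> ?S'" using agree x by simp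
      next
        fix x assume x: "x \<in> ?S'"
        then have "x \<noteq> i" "x \<noteq> j" using z True by auto
        then show "x \<in> ?S" using agree x by simp
      qed
      then show ?thesis unfolding hz_map_def by simp
    next
      case ft: True
      have "?S = insert i (insert j ?S')"
      proof (intro set_eqI iffI)
        fix x assume x: "x \<in> ?S"
        show "x \<in> insert i (insert j ?S')"
        proof (cases "x = i \<or> x = j")
          case False then show ?thesis using agree x by auto
        qed auto
      next
        fix x assume x: "x \<in> insert i (insert j ?S')"
        show "x \<in> ?S"
        proof (cases "x = i \<or> x = j")
          case True then show ?thesis using ir jr ft fij by auto
        next
          case False then show ?thesis using agree x by auto
        qed
      qed
      then have "sum v ?S = v i + (v j + sum v ?S')" using i' ij by simp
      then show ?thesis using vs True unfolding hz_map_def by simp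
    qed
  qed
qed

lemma hz_map_upd:
  assumes ft: "f t = 0" and trsw: "1 \<le> t" "t \<le> m" and q: "1 \<le> q" "q \<le> k"
  shows "hz_map m k (f(t := q)) v = (hz_map m k f v)(q := hz_map m k f v q + v t)"
proof (rule ext)
  fix j
  show "hz_map m k (f(t := q)) v j = ((hz_map m k f v)(q := hz_map m k f v q + v t)) j"
  proof (cases "1 \<le> j \<and> j \<le> k")
    case False
    then have "j \<noteq> q" using q by auto
    then show ?thesis using hz_map_out[OF False] by simp
  next
    case jr: True
    show ?thesis
    proof (cases "j = q")
      case False
      have "{i. 1 \<le> i \<and> i \<le> m \<and> (f(t := q)) i = j} = {i. 1 \<le> i \<and> i \<le> m \<and> f i = j}"
      proof (intro set_eqI iffI)
        fix x assume x: "x \<in> {i. 1 \<le> i \<and> i \<le> m \<and> (f(t := q)) i = j}"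
        then have "x \<noteq> t" using False by auto
        then show "x \<in> {i. 1 \<le> i \<and> i \<le> m \<and> f i = j}" using x by simp
      next
        fix x assume x: "x \<in> {i. 1 \<le> i \<and> i \<le> m \<and> f i = j}"
        then have "x \<noteq> t" using ft jr by auto
        then show "x \<in> {i. 1 \<le> i \<and> i \<le> m \<and> (f(t := q)) i = j}" using x by simp
      qed
      then show ?thesis using False unfolding hz_map_def by simp
    next
      case True
      have "{i. 1 \<le> i \<and> i \<le> m \<and> (f(t := q)) i = j} = insert t {i. 1 \<le> i \<and> i \<le> m \<and> f i = j}"
      proof (intro set_eqI iffI)
        fix x assume x: "x \<in> {i. 1 \<le> i \<and> i \<le> m \<and> (f(t := q)) i = j}"
        show "x \<in> insert t {i. 1 \<le> i \<and> i \<le> m \<and> f i = j}"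
        proof (cases "x = t")
          case False then show ?thesis using x by simp
        qed simp
      next
        fix x assume x: "x \<in> insert t {i. 1 \<le> i \<and> i \<le> m \<and> f i = j}"
        show "x \<in> {i. 1 \<le> i \<and> i \<le> m \<and> (f(t := q)) i = j}"
        proof (cases "x = t")
          case False then show ?thesis using x by simp
        qed (use trsw True in simp)
      qed
      moreover have "t \<notin> {i. 1 \<le> i \<and> i \<le> m \<and> f i = j}" using True ft q by auto
      ultimately show ?thesis using True q unfolding hz_map_def by simp
    qed
  qed
qed

lemma hz_map_perm:
  assumes p0: "\<pi> 0 = 0" and bij: "bij_betw \<pi> {1..2 ^ k} {1..2 ^ k}"
    and sg: "\<forall>i\<in>{1..2 ^ k}. in_Aplus (\<pi> i) = in_Aplus i"
  shows "hz_map (2 ^ k) (2 ^ k) \<pi> (sgnv k) = sgnv k"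
proof (rule ext)
  fix j
  show "hz_map (2 ^ k) (2 ^ k) \<pi> (sgnv k) j = sgnv k j"
  proof (cases "1 \<le> j \<and> j \<le> 2 ^ k")
    case False then show ?thesis unfolding hz_map_def sgnv_def by auto
  next
    case True
    then have "j \<in> \<pi> ` {1..2 ^ k}" using bij unfolding bij_betw_def by auto
    then obtain i0 where i0: "i0 \<in> {1..2 ^ k}" "\<pi> i0 = j" by auto
    have "{i. 1 \<le> i \<and> i \<le> 2 ^ k \<and> \<pi> i = j} = {i0}"
      using i0 bij unfolding bij_betw_def inj_on_def by auto
    then show ?thesis using True i0 sg unfolding hz_map_def sgnv_def by auto
  qed
qed

definition truncm :: "nat \<Rightarrow> nat \<Rightarrow> nat" where
  "truncm a = (\<lambda>p. if p \<le> 2 ^ a then p else 0)"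

lemma trunc_pm: "pointed_map (2 ^ K) (2 ^ a) (truncm a)"
  unfolding pointed_map_def truncm_def by auto

lemma hz_map_trunc:
  assumes "a \<le> K"
  shows "hz_map (2 ^ K) (2 ^ a) (truncm a) (sgnv K) = sgnv a"
proof (rule ext)
  fix j
  have pw: "(2::nat) ^ a \<le> 2 ^ K" using assms by simp
  show "hz_map (2 ^ K) (2 ^ a) (truncm a) (sgnv K) j = sgnv a j"
  proof (cases "1 \<le> j \<and> j \<le> 2 ^ a")
    case False then show ?thesis unfolding hz_map_def sgnv_def by auto
  next
    case True
    have jK: "j \<le> 2 ^ K" using True pw by linarith
    have "{i. 1 \<le> i \<and> i \<le> 2 ^ K \<and> truncm a i = j} = {j}"
      using True jK unfolding truncm_def by auto
    then show ?thesis using True jK unfolding hz_map_def sgnv_def by auto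
  qed
qed

lemma pm_comp: "pointed_map m k f \<Longrightarrow> pointed_map k l g \<Longrightarrow> pointed_map m l (g \<circ> f)"
  unfolding pointed_map_def by auto

lemma rep_exists:
  assumes "v \<in> hz_elts m"
  shows "\<exists>k f. pointed_map (2 ^ k) m f \<and> hz_map (2 ^ k) m f (sgnv k) = v"
proof -
  define N where "N v = (\<Sum>q\<in>{1..m}. nat \<bar>v q\<bar>)" for v :: "nat \<Rightarrow> int"
  have "\<forall>v. N v = n \<longrightarrow> v \<in> hz_elts m \<longrightarrow> (\<exists>k f. pointed_map (2 ^ k) m f \<and> hz_map (2 ^ k) m f (sgnv k) = v)" for n
  proof (induction n)
    case 0
    show ?case
    proof (intro allI impI)
      fix v assume "N v = 0" "v \<in> hz_elts m"
      then have z: "\<forall>a\<in>{1..m}. v a = 0" "\<forall>i. (i = 0 \<or> m < i) \<longrightarrow> v i = 0"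
        unfolding N_def hz_elts_def by auto
      have "v = (\<lambda>_. 0)"
      proof (rule ext)
        fix x show "v x = 0" using z by (cases "x = 0"; cases "x \<le> m") auto
      qed
      then show "\<exists>k f. pointed_map (2 ^ k) m f \<and> hz_map (2 ^ k) m f (sgnv k) = v"
        by (intro exI[of _ 0] exI[of _ "\<lambda>_. 0"]) (auto simp: pointed_map_def hz_map_const0)
    qed
  next
    case (Suc n)
    show ?case
    proof (intro allI impI)
      fix v assume Nv: "N v = Suc n" and vh: "v \<in> hz_elts m"
      have "\<exists>q\<in>{1..m}. v q \<noteq> 0"
      proof (rule ccontr)
        assume "\<not> (\<exists>q\<in>{1..m}. v q \<noteq> 0)"
        then have "N v = 0" unfolding N_def by auto
        then show False using Nv by simp
      qed
      then obtain q where q: "q \<in> {1..m}" "v q \<noteq> 0" by blast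
      define s :: int where "s = (if v q > 0 then 1 else -1)"
      define v' where "v' = v(q := v q - s)"
      have "nat \<bar>v' q\<bar> + 1 = nat \<bar>v q\<bar>" using q unfolding v'_def s_def by auto
      moreover have "N v = nat \<bar>v q\<bar> + (\<Sum>x\<in>{1..m}-{q}. nat \<bar>v x\<bar>)"
        unfolding N_def using q(1) by (simp add: sum.remove)
      moreover have "N v' = nat \<bar>v' q\<bar> + (\<Sum>x\<in>{1..m}-{q}. nat \<bar>v' x\<bar>)"
        unfolding N_def using q(1) by (simp add: sum.remove)
      moreover have "(\<Sum>x\<in>{1..m}-{q}. nat \<bar>v' x\<bar>) = (\<Sum>x\<in>{1..m}-{q}. nat \<bar>v x\<bar>)"
        unfolding v'_def by (rule sum.cong) auto
      ultimately have "N v' + 1 = N v" by simp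
      then have Nv': "N v' = n" using Nv by simp
      have vh': "v' \<in> hz_elts m" using vh q unfolding v'_def hz_elts_def by auto
      obtain k f where kf: "pointed_map (2 ^ k) m f" "hz_map (2 ^ k) m f (sgnv k) = v'"
        using Suc.IH Nv' vh' by blast
      define K where "K = k + 2"
      define f1 where "f1 = f \<circ> truncm k"
      have pm1: "pointed_map (2 ^ K) m f1" unfolding f1_def by (rule pm_comp[OF trunc_pm kf(1)])
      have v1: "hz_map (2 ^ K) m f1 (sgnv K) = v'"
      proof -
        have kK: "k \<le> K" by (simp add: K_def)
        show ?thesis unfolding f1_def
          using hz_map_comp[OF trunc_pm[of K k] kf(1), of "sgnv K"] hz_map_trunc[OF kK] kf(2) by simp
      qed
      define t :: nat where "t = (if (s = 1) = even K then 2 ^ K else 2 ^ K - 1)"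
      have big: "(2::nat) ^ k < 2 ^ K - 1"
      proof -
        have "(1::nat) \<le> 2 ^ k" by simp
        moreover have "(2::nat) ^ K = 4 * 2 ^ k" unfolding K_def by simp
        ultimately show ?thesis by linarith
      qed
      have trsw: "1 \<le> t" "t \<le> 2 ^ K" "2 ^ k < t" unfolding t_def using big by (auto simp: K_def)
      have st: "sgnv K t = s"
      proof -
        have a1: "in_Aplus (2 ^ K) = even K" unfolding in_Aplus_def using bc_pow_m1 by simp
        have e: "(2::nat) ^ K - 1 - 1 = 2 ^ Suc (k + 1) - 2" unfolding K_def by simp
        have a2: "in_Aplus (2 ^ K - 1) = even (k + 1)" unfolding in_Aplus_def e bc_pow_m2 ..
        show ?thesis using trsw a1 a2 unfolding sgnv_def t_def s_def K_def by auto
      qed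
      have f1t: "f1 t = 0" unfolding f1_def truncm_def using trsw kf(1) unfolding pointed_map_def by auto
      have "hz_map (2 ^ K) m (f1(t := q)) (sgnv K) = v'(q := v' q + s)"
        using hz_map_upd[of f1 t "2 ^ K" q m "sgnv K"] f1t trsw q v1 st by auto
      also have "\<dots> = v" unfolding v'_def by auto
      finally have "hz_map (2 ^ K) m (f1(t := q)) (sgnv K) = v" .
      moreover have "pointed_map (2 ^ K) m (f1(t := q))" using pm1 q trsw unfolding pointed_map_def by auto
      ultimately show "\<exists>k f. pointed_map (2 ^ k) m f \<and> hz_map (2 ^ k) m f (sgnv k) = v" by blast
    qed
  qed
  then show ?thesis using assms by blast
qed




lemma pm_p: "1 \<le> i \<Longrightarrow> i \<le> N \<Longrightarrow> pointed_map N (N - 1) (p_map i)"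
  unfolding pointed_map_def p_map_def by auto

lemma pm_d: "1 \<le> l \<Longrightarrow> pointed_map (N - 1) N (d_map l)"
  unfolding pointed_map_def d_map_def by auto

lemma pm_s: "1 \<le> i \<Longrightarrow> i < j \<Longrightarrow> j \<le> N \<Longrightarrow> 1 \<le> l \<Longrightarrow> l \<le> N - 1 \<Longrightarrow> pointed_map N (N - 1) (s_map i j l)"
  unfolding pointed_map_def s_map_def Let_def by auto

lemma ar1: "1 \<le> i \<Longrightarrow> i < j \<Longrightarrow> j \<le> N \<Longrightarrow> 1 \<le> l \<Longrightarrow> t \<noteq> i \<Longrightarrow> t \<noteq> j \<Longrightarrow>
   s_map i j l t = d_map l (p_map i (p_map j t))"
  unfolding s_map_def d_map_def p_map_def Let_def by auto

lemma ar2: "1 \<le> i \<Longrightarrow> i < j \<Longrightarrow> 1 \<le> l \<Longrightarrow> d_map l (p_map i (p_map j i)) = 0 \<and> d_map l (p_map i (p_map j j)) = 0"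
  unfolding d_map_def p_map_def by auto

lemma ar3: "1 \<le> i \<Longrightarrow> i < j \<Longrightarrow> s_map i j l i = l" "1 \<le> i \<Longrightarrow> i < j \<Longrightarrow> s_map i j l j = l" "s_map i j l 0 = 0"
  unfolding s_map_def by auto


definition sigm :: "nat \<Rightarrow> nat \<Rightarrow> nat \<Rightarrow> nat" where
  "sigm i j u = (if u = 0 then 0 else if u = 1 then i else
     (if u - 1 < i then u - 1 else if u < j then u else u + 1))"

lemma ar4: "1 \<le> i \<Longrightarrow> i < j \<Longrightarrow> t \<noteq> i \<Longrightarrow> t \<noteq> j \<Longrightarrow> sigm i j (s_map i j 1 t) = t"
  unfolding sigm_def s_map_def Let_def by auto

lemma ar5: "1 \<le> i \<Longrightarrow> i < j \<Longrightarrow> j \<le> N \<Longrightarrow> u \<le> N - 1 \<Longrightarrow> sigm i j u \<le> N"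
  unfolding sigm_def by auto

lemma pm_const0: "pointed_map m k (\<lambda>_. 0)" unfolding pointed_map_def by auto

lemma pm_id: "pointed_map m m id" unfolding pointed_map_def by auto

lemma pm_smash: "pointed_map m m' f \<Longrightarrow> pointed_map k k' g \<Longrightarrow> pointed_map (m * k) (m' * k') (smash_map m k m' f g)"
proof -
  assume f: "pointed_map m m' f" and g: "pointed_map k k' g"
  show ?thesis unfolding pointed_map_def
  proof (intro conjI allI impI)
    show "smash_map m k m' f g 0 = 0" unfolding smash_map_def by simp
    fix p assume p: "p \<le> m * k"
    show "smash_map m k m' f g p \<le> m' * k'"
    proof (cases "p = 0")
      case False
      then have mpos: "0 < m" using p by (cases "m = 0") auto
      let ?i = "(p - 1) mod m + 1" and ?j = "(p - 1) div m + 1"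
      have ir: "?i \<le> m" using mod_bound[OF mpos] by blast
      have jr: "?j \<le> k" using div_bound[of p m k] False p by simp
      have fi: "f ?i \<le> m'" and gj: "g ?j \<le> k'" using f g ir jr unfolding pointed_map_def by auto
      show ?thesis
      proof (cases "f ?i = 0 \<or> g ?j = 0")
        case False
        then have "(g ?j - 1) * m' + f ?i \<le> m' * k'" using enc_bound[of "f ?i" m' "g ?j" k'] fi gj by auto
        then show ?thesis unfolding smash_map_def Let_def using False by auto
      qed (auto simp: smash_map_def Let_def)
    qed (simp add: smash_map_def)
  qed
qed

locale FDL = GR + fixes n :: nat and r assumes fdl: "is_fdl R n r"
begin

abbreviation x where "x k \<equiv> rpow R n r k"

lemma r_in: "r \<in> gelts R 2 n" using fdl unfolding is_fdl_def by blast
lemma r_p2: "gmap R 2 1 (p_map 2) n r = gone R n" using fdl unfolding is_fdl_def by blast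
lemma r_perm: "1 \<le> k \<Longrightarrow> \<pi> 0 = 0 \<Longrightarrow> bij_betw \<pi> {1..2 ^ k} {1..2 ^ k} \<Longrightarrow>
        (\<forall>i\<in>{1..2 ^ k}. in_Aplus (\<pi> i) = in_Aplus i) \<Longrightarrow>
        gmap R (2 ^ k) (2 ^ k) \<pi> n (x k) = x k" using fdl unfolding is_fdl_def by blast
lemma r_cancel: "1 \<le> k \<Longrightarrow> 1 \<le> i \<Longrightarrow> i < j \<Longrightarrow> j \<le> 2 ^ k \<Longrightarrow> in_Aplus i \<noteq> in_Aplus j \<Longrightarrow>
        1 \<le> l \<Longrightarrow> l \<le> 2 ^ k - 1 \<Longrightarrow>
        gmap R (2 ^ k) (2 ^ k - 1) (s_map i j l) n (x k) =
        gmap R (2 ^ k - 2) (2 ^ k - 1) (d_map l) n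
          (gmap R (2 ^ k - 1) (2 ^ k - 2) (p_map i) n
            (gmap R (2 ^ k) (2 ^ k - 1) (p_map j) n (x k)))" using fdl unfolding is_fdl_def by blast

lemma x_in: "x k \<in> gelts R (2 ^ k) n"
proof (induction k)
  case 0 then show ?case using one_in by simp
next
  case (Suc k) then show ?case using gmul_in[OF Suc r_in] by (simp add: mult.commute)
qed

lemma gmap_const0: "xx \<in> gelts R m n \<Longrightarrow> gmap R m k (\<lambda>_. 0) n xx = gbase R k n"
proof -
  assume xx: "xx \<in> gelts R m n"
  have "gmap R m 0 (\<lambda>_. 0) n xx \<in> gelts R 0 n" by (rule gmap_in[OF pm_const0 xx])
  then have e: "gmap R m 0 (\<lambda>_. 0) n xx = gbase R 0 n" using elts0 by auto
  have "gmap R 0 k (\<lambda>_. 0) n (gmap R m 0 (\<lambda>_. 0) n xx) = gmap R m k (\<lambda>_. 0) n xx"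
    using gmap_comp[where m=m and k=0 and f="\<lambda>_. 0" and l=k and g="\<lambda>_. 0", OF pm_const0 pm_const0 xx]
    by (simp add: o_def)
  then show ?thesis using e gmap_base[OF pm_const0] by (simp add: o_def)
qed

lemma perm_inv: assumes k: "1 \<le> k" and p0: "\<pi> 0 = 0" and bij: "bij_betw \<pi> {1..2 ^ k} {1..2 ^ k}"
  and sg: "\<forall>i\<in>{1..2 ^ k}. in_Aplus (\<pi> i) = in_Aplus i" and f: "pointed_map (2 ^ k) M f"
  shows "gmap R (2 ^ k) M (f \<circ> \<pi>) n (x k) = gmap R (2 ^ k) M f n (x k)"
proof -
  have pm: "pointed_map (2 ^ k) (2 ^ k) \<pi>" unfolding pointed_map_def
  proof (intro conjI allI impI)
    fix i :: nat assume "i \<le> 2 ^ k"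
    then show "\<pi> i \<le> 2 ^ k" using p0 bij unfolding bij_betw_def by (cases "i = 0") auto
  qed (rule p0)
  have "gmap R (2 ^ k) M (f \<circ> \<pi>) n (x k) = gmap R (2 ^ k) M f n (gmap R (2 ^ k) (2 ^ k) \<pi> n (x k))"
    using gmap_comp[OF pm f x_in] by simp
  then show ?thesis using r_perm[OF k p0 bij sg] by simp
qed

lemma cancel:
  assumes k: "1 \<le> k" and f: "pointed_map (2 ^ k) M f"
    and ij: "1 \<le> i" "i < j" "j \<le> 2 ^ k" and sg: "in_Aplus i \<noteq> in_Aplus j" and fij: "f i = f j"
  shows "gmap R (2 ^ k) M f n (x k) = gmap R (2 ^ k) M (f(i := 0, j := 0)) n (x k)"
proof -
  define N :: nat where "N = 2 ^ k"
  have N2: "2 \<le> N" unfolding N_def using k by (metis one_le_power power_one_right power_increasing_iff Suc_1 le_add_same_cancel1 one_le_numeral power_increasing)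
  define h where "h u = f (sigm i j u)" for u
  have hpm: "pointed_map (N - 1) M h" unfolding pointed_map_def h_def
  proof (intro conjI allI impI)
    show "f (sigm i j 0) = 0" using f unfolding sigm_def pointed_map_def by simp
    fix u assume "u \<le> N - 1"
    then have "sigm i j u \<le> N" using ar5[OF ij(1,2), of N u] ij(3) unfolding N_def by simp
    then show "f (sigm i j u) \<le> M" using f unfolding pointed_map_def N_def by simp
  qed
  have l1: "1 \<le> (1::nat)" "1 \<le> N - 1" using N2 by auto
  have spm: "pointed_map N (N - 1) (s_map i j 1)" using pm_s[OF ij(1,2) _ l1] ij(3) unfolding N_def by simp
  have pjm: "pointed_map N (N - 1) (p_map j)" using pm_p[of j N] ij unfolding N_def by simp
  have "i \<le> N - 1" using ij unfolding N_def by simp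
  then have "pointed_map (N - 1) (N - 1 - 1) (p_map i)" using pm_p ij(1) by blast
  then have pim: "pointed_map (N - 1) (N - 2) (p_map i)" by (simp add: numeral_2_eq_2)
  have dm: "pointed_map (N - 2) (N - 1) (d_map 1)" using pm_d[of 1 "N - 1"] N2 by (simp add: numeral_2_eq_2)
  have xk: "x k \<in> gelts R N n" using x_in unfolding N_def .
  have e1: "gmap R N M f n (x k) = gmap R N M (h \<circ> s_map i j 1) n (x k)"
  proof (rule gmap_cong[OF _ xk])
    fix t assume "t \<le> N"
    show "f t = (h \<circ> s_map i j 1) t"
    proof (cases "t = i \<or> t = j")
      case True then show ?thesis using ij fij ar3 unfolding h_def sigm_def by auto
    next
      case False then show ?thesis using ar4[OF ij(1,2)] unfolding h_def by auto
    qed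
  qed
  have e2: "gmap R N M (h \<circ> s_map i j 1) n (x k) = gmap R (N - 1) M h n (gmap R N (N - 1) (s_map i j 1) n (x k))"
    using gmap_comp[OF spm hpm xk] by simp
  have e3: "gmap R N (N - 1) (s_map i j 1) n (x k) = gmap R (N - 2) (N - 1) (d_map 1) n
          (gmap R (N - 1) (N - 2) (p_map i) n (gmap R N (N - 1) (p_map j) n (x k)))"
    using r_cancel[OF k ij sg _ ] l1 unfolding N_def by simp
  have y1: "gmap R N (N - 1) (p_map j) n (x k) \<in> gelts R (N - 1) n" by (rule gmap_in[OF pjm xk])
  have y2: "gmap R (N - 1) (N - 2) (p_map i) n (gmap R N (N - 1) (p_map j) n (x k)) \<in> gelts R (N - 2) n"
    by (rule gmap_in[OF pim y1])
  have e4: "gmap R (N - 1) M h n (gmap R (N - 2) (N - 1) (d_map 1) n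
          (gmap R (N - 1) (N - 2) (p_map i) n (gmap R N (N - 1) (p_map j) n (x k))))
       = gmap R N M (h \<circ> d_map 1 \<circ> p_map i \<circ> p_map j) n (x k)"
    using gmap_comp[OF dm hpm y2] gmap_comp[OF pim pm_comp[OF dm hpm] y1] gmap_comp[OF pjm pm_comp[OF pim pm_comp[OF dm hpm]] xk]
    by (simp add: o_assoc)
  have e5: "gmap R N M (h \<circ> d_map 1 \<circ> p_map i \<circ> p_map j) n (x k) = gmap R N M (f(i := 0, j := 0)) n (x k)"
  proof (rule gmap_cong[OF _ xk])
    fix t assume t: "t \<le> N"
    show "(h \<circ> d_map 1 \<circ> p_map i \<circ> p_map j) t = (f(i := 0, j := 0)) t"
    proof (cases "t = i \<or> t = j")
      case True
      then have "d_map 1 (p_map i (p_map j t)) = 0" using ar2[OF ij(1,2), of 1] by auto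
      then show ?thesis using True f unfolding h_def sigm_def pointed_map_def by auto
    next
      case False
      have "d_map 1 (p_map i (p_map j t)) = s_map i j 1 t" using ar1[OF ij(1,2,3)] False by simp
      then show ?thesis using False ar4[OF ij(1,2)] unfolding h_def by auto
    qed
  qed
  show ?thesis using e1 e2 e3 e4 e5 unfolding N_def by simp
qed

end



lemma smash_unf: "1 \<le> p \<Longrightarrow> p \<le> m * m2 \<Longrightarrow> smash_map m m2 k f g p =
   (if f ((p - 1) mod m + 1) = 0 \<or> g ((p - 1) div m + 1) = 0 then 0
    else (g ((p - 1) div m + 1) - 1) * k + f ((p - 1) mod m + 1))"
  unfolding smash_map_def Let_def by auto

lemma smash_trunc: "p \<le> 2 ^ k * 2 \<Longrightarrow> smash_map (2 ^ k) 2 (2 ^ k) id (p_map 2) p = truncm k p"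
proof -
  assume p: "p \<le> 2 ^ k * 2"
  show ?thesis
  proof (cases "p = 0")
    case True then show ?thesis unfolding smash_map_def truncm_def by simp
  next
    case False
    show ?thesis
    proof (cases "p \<le> 2 ^ k")
      case True
      then have "(p - 1) div 2 ^ k = 0" "(p - 1) mod 2 ^ k = p - 1" using False by auto
      then have "smash_map (2 ^ k) 2 (2 ^ k) id (p_map 2) p = p"
        using smash_unf[of p "2 ^ k" 2 "2 ^ k" id "p_map 2"] False p by (simp add: p_map_def)
      then show ?thesis using True unfolding truncm_def by simp
    next
      case c2: False
      define q where "q = p - 1 - 2 ^ k"
      have l: "q < 2 ^ k" using p c2 unfolding q_def by simp
      have e: "p - 1 = q + 2 ^ k" using c2 unfolding q_def by simp
      have "(q + 2 ^ k) div 2 ^ k = q div 2 ^ k + 1" by (rule div_add_self2) simp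
      then have "(p - 1) div 2 ^ k = 1" unfolding e using l by simp
      then have "smash_map (2 ^ k) 2 (2 ^ k) id (p_map 2) p = 0"
        using smash_unf[of p "2 ^ k" 2 "2 ^ k" id "p_map 2"] False p by (simp add: p_map_def)
      then show ?thesis using c2 unfolding truncm_def by simp
    qed
  qed
qed


lemma pm_p2: "pointed_map 2 1 (p_map 2)" using pm_p[of 2 2] by simp

lemma trunc_trunc: "a \<le> K \<Longrightarrow> truncm a (truncm K p) = truncm a p"
  unfolding truncm_def by (auto dest: le_trans[OF _ power_increasing[of a K "2::nat"]])

context FDL begin

lemma x_Suc: "x (Suc k) = gmul R (2 ^ k) 2 n (x k) r" by simp

lemma trunc_x: "gmap R (2 ^ Suc k) (2 ^ k) (truncm k) n (x (Suc k)) = x k"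
proof -
  have "gmap R (2 ^ k * 2) (2 ^ k * 1) (smash_map (2 ^ k) 2 (2 ^ k) id (p_map 2)) n (gmul R (2 ^ k) 2 n (x k) r)
      = gmul R (2 ^ k) 1 n (gmap R (2 ^ k) (2 ^ k) id n (x k)) (gmap R 2 1 (p_map 2) n r)"
    by (rule gmul_smash[OF pm_id pm_p2 x_in r_in])
  also have "\<dots> = x k" using gmap_id[OF x_in] r_p2 one_r[OF x_in] by simp
  finally have a: "gmap R (2 ^ k * 2) (2 ^ k) (smash_map (2 ^ k) 2 (2 ^ k) id (p_map 2)) n (x (Suc k)) = x k"
    by simp
  have xs: "x (Suc k) \<in> gelts R (2 ^ k * 2) n" using x_in[of "Suc k"] by (simp add: mult.commute)
  have "gmap R (2 ^ k * 2) (2 ^ k) (smash_map (2 ^ k) 2 (2 ^ k) id (p_map 2)) n (x (Suc k))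
      = gmap R (2 ^ k * 2) (2 ^ k) (truncm k) n (x (Suc k))"
    by (rule gmap_cong[OF _ xs]) (rule smash_trunc)
  then show ?thesis using a by (simp add: mult.commute)
qed

lemma raise: "pointed_map (2 ^ k) M f \<Longrightarrow>
   gmap R (2 ^ k) M f n (x k) = gmap R (2 ^ Suc k) M (f \<circ> truncm k) n (x (Suc k))"
  using gmap_comp[OF trunc_pm[of "Suc k" k] _ x_in[of "Suc k"]] trunc_x by metis

lemma raise_le:
  assumes aK: "a \<le> K" and f: "pointed_map (2 ^ a) M f"
  shows "gmap R (2 ^ a) M f n (x a) = gmap R (2 ^ K) M (f \<circ> truncm a) n (x K)"
  using aK
proof (induction K rule: dec_induct)
  case base
  show ?case by (rule gmap_cong[OF _ x_in]) (simp add: truncm_def)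
next
  case (step K)
  have pm: "pointed_map (2 ^ K) M (f \<circ> truncm a)" by (rule pm_comp[OF trunc_pm f])
  have "gmap R (2 ^ K) M (f \<circ> truncm a) n (x K) = gmap R (2 ^ Suc K) M (f \<circ> truncm a \<circ> truncm K) n (x (Suc K))"
    by (rule raise[OF pm])
  also have "\<dots> = gmap R (2 ^ Suc K) M (f \<circ> truncm a) n (x (Suc K))"
    by (rule gmap_cong[OF _ x_in]) (simp add: trunc_trunc step.hyps)
  finally have "gmap R (2 ^ K) M (f \<circ> truncm a) n (x K) = gmap R (2 ^ Suc K) M (f \<circ> truncm a) n (x (Suc K))" .
  then show ?case using step.IH by (rule trans[rotated])
qed

end

lemma hz_raise: "a \<le> K \<Longrightarrow> pointed_map (2 ^ a) M f \<Longrightarrow>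
   hz_map (2 ^ K) M (f \<circ> truncm a) (sgnv K) = hz_map (2 ^ a) M f (sgnv a)"
proof -
  assume aK: "a \<le> K" and f: "pointed_map (2 ^ a) M f"
  show ?thesis using hz_map_comp[OF trunc_pm[of K a] f, of "sgnv K"] hz_map_trunc[OF aK] by simp
qed


definition redm :: "nat \<Rightarrow> (nat \<Rightarrow> nat) \<Rightarrow> bool" where
  "redm k f \<longleftrightarrow> (\<forall>a b. 1 \<le> a \<longrightarrow> a \<le> 2 ^ k \<longrightarrow> 1 \<le> b \<longrightarrow> b \<le> 2 ^ k \<longrightarrow> f a = f b \<longrightarrow> f a \<noteq> 0 \<longrightarrow>
      in_Aplus a = in_Aplus b)"

definition Dset :: "nat \<Rightarrow> (nat \<Rightarrow> nat) \<Rightarrow> (nat \<Rightarrow> nat) \<Rightarrow> nat set" where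
  "Dset k f g = {t. 1 \<le> t \<and> t \<le> 2 ^ k \<and> f t \<noteq> g t}"

definition trsw :: "nat \<Rightarrow> nat \<Rightarrow> nat \<Rightarrow> nat" where
  "trsw i j = (\<lambda>t. if t = i then j else if t = j then i else t)"

lemma Dset_fin: "finite (Dset k f g)" unfolding Dset_def by simp

lemma Dset_sym: "Dset k f g = Dset k g f" unfolding Dset_def by auto

lemma sum_const_sgn: "(\<And>t. t \<in> F \<Longrightarrow> sgnv k t = c) \<Longrightarrow> sum (sgnv k) F = c * int (card F)"
  by (simp add: sum.cong[of F F "sgnv k" "\<lambda>_. c"])

lemma sgn_eq_iff: "1 \<le> a \<Longrightarrow> a \<le> 2 ^ k \<Longrightarrow> 1 \<le> b \<Longrightarrow> b \<le> 2 ^ k \<Longrightarrow> (sgnv k a = sgnv k b) = (in_Aplus a = in_Aplus b)"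
  unfolding sgnv_def by auto

lemma tr_props:
  assumes ij: "1 \<le> i" "i \<le> 2 ^ k" "1 \<le> j" "j \<le> 2 ^ k" and s: "in_Aplus i = in_Aplus j"
  shows "trsw i j 0 = 0" "bij_betw (trsw i j) {1..2 ^ k} {1..2 ^ k}"
    "\<forall>t\<in>{1..2 ^ k}. in_Aplus (trsw i j t) = in_Aplus t" "pointed_map (2 ^ k) (2 ^ k) (trsw i j)"
proof -
  show "trsw i j 0 = 0" using ij unfolding trsw_def by auto
  show "bij_betw (trsw i j) {1..2 ^ k} {1..2 ^ k}"
    by (rule bij_betw_byWitness[where f' = "trsw i j"]) (use ij in \<open>auto simp: trsw_def\<close>)
  show "\<forall>t\<in>{1..2 ^ k}. in_Aplus (trsw i j t) = in_Aplus t" using s unfolding trsw_def by auto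
  show "pointed_map (2 ^ k) (2 ^ k) (trsw i j)" using ij unfolding trsw_def pointed_map_def by auto
qed

context FDL begin

lemma reduce:
  assumes k: "1 \<le> k"
  shows "pointed_map (2 ^ k) M f \<Longrightarrow> \<exists>f'. pointed_map (2 ^ k) M f' \<and> redm k f' \<and>
     hz_map (2 ^ k) M f' (sgnv k) = hz_map (2 ^ k) M f (sgnv k) \<and> gmap R (2 ^ k) M f' n (x k) = gmap R (2 ^ k) M f n (x k)"
proof (induction "card {t. 1 \<le> t \<and> t \<le> 2 ^ k \<and> f t \<noteq> 0}" arbitrary: f rule: less_induct)
  case less
  note f = less.prems
  show ?case
  proof (cases "redm k f")
    case True then show ?thesis using f by blast
  next
    case False
    then obtain a b where ab: "1 \<le> a" "a \<le> 2 ^ k" "1 \<le> b" "b \<le> 2 ^ k" "f a = f b" "f a \<noteq> 0"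
      "in_Aplus a \<noteq> in_Aplus b" unfolding redm_def by blast
    have anb: "a \<noteq> b" using ab by auto
    define i where "i = min a b"
    define j where "j = max a b"
    have ij: "1 \<le> i" "i < j" "j \<le> 2 ^ k" "in_Aplus i \<noteq> in_Aplus j" "f i = f j" "f i \<noteq> 0"
      using ab anb unfolding i_def j_def by (auto simp: min_def max_def split: if_splits)
    define f' where "f' = f(i := 0, j := 0)"
    have pm': "pointed_map (2 ^ k) M f'" using f unfolding f'_def pointed_map_def by auto
    have g: "gmap R (2 ^ k) M f n (x k) = gmap R (2 ^ k) M f' n (x k)"
      unfolding f'_def by (rule cancel[OF k f ij(1,2,3,4,5)])
    have sij: "sgnv k i + sgnv k j = 0" using ij sgn_val[of i k] sgn_val[of j k] by auto
    have h: "hz_map (2 ^ k) M f (sgnv k) = hz_map (2 ^ k) M f' (sgnv k)"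
      by (rule hz_map_kill[where i = i and j = j]) (use ij sij in \<open>auto simp: f'_def\<close>)
    have sub: "{t. 1 \<le> t \<and> t \<le> 2 ^ k \<and> f' t \<noteq> 0} \<subseteq> {t. 1 \<le> t \<and> t \<le> 2 ^ k \<and> f t \<noteq> 0} - {i}"
      unfolding f'_def by auto
    have iS: "i \<in> {t. 1 \<le> t \<and> t \<le> 2 ^ k \<and> f t \<noteq> 0}" using ij by auto
    have c1: "card {t. 1 \<le> t \<and> t \<le> 2 ^ k \<and> f' t \<noteq> 0} \<le> card ({t. 1 \<le> t \<and> t \<le> 2 ^ k \<and> f t \<noteq> 0} - {i})"
      by (rule card_mono[OF _ sub]) simp
    have c2: "card ({t. 1 \<le> t \<and> t \<le> 2 ^ k \<and> f t \<noteq> 0} - {i}) < card {t. 1 \<le> t \<and> t \<le> 2 ^ k \<and> f t \<noteq> 0}"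
      by (rule card_Diff1_less[OF _ iS]) simp
    from c1 c2 have "card {t. 1 \<le> t \<and> t \<le> 2 ^ k \<and> f' t \<noteq> 0} < card {t. 1 \<le> t \<and> t \<le> 2 ^ k \<and> f t \<noteq> 0}"
      by linarith
    from less.hyps[OF this pm'] obtain f'' where "pointed_map (2 ^ k) M f''" "redm k f''"
      "hz_map (2 ^ k) M f'' (sgnv k) = hz_map (2 ^ k) M f' (sgnv k)" "gmap R (2 ^ k) M f'' n (x k) = gmap R (2 ^ k) M f' n (x k)"
      by blast
    then show ?thesis using g h by metis
  qed
qed


lemma step_swap:
  assumes k: "1 \<le> k" and f: "pointed_map (2 ^ k) M f" and g: "pointed_map (2 ^ k) M g"
    and rf: "redm k f" and rg: "redm k g"
    and hz: "hz_map (2 ^ k) M f (sgnv k) = hz_map (2 ^ k) M g (sgnv k)"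
    and i: "1 \<le> i" "i \<le> 2 ^ k" and fi: "f i \<noteq> 0" and fgi: "f i \<noteq> g i"
  shows "\<exists>g'. pointed_map (2 ^ k) M g' \<and> redm k g' \<and> hz_map (2 ^ k) M g' (sgnv k) = hz_map (2 ^ k) M g (sgnv k)
      \<and> gmap R (2 ^ k) M g' n (x k) = gmap R (2 ^ k) M g n (x k) \<and> Dset k f g' \<subset> Dset k f g"
proof -
  define q where "q = f i"
  have q: "1 \<le> q" "q \<le> M" using fi f i unfolding q_def pointed_map_def by auto
  define Ff where "Ff = {t. 1 \<le> t \<and> t \<le> 2 ^ k \<and> f t = q}"
  define Fg where "Fg = {t. 1 \<le> t \<and> t \<le> 2 ^ k \<and> g t = q}"
  have hf: "hz_map (2 ^ k) M f (sgnv k) q = sum (sgnv k) Ff" unfolding hz_map_def Ff_def using q by simp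
  have hg: "hz_map (2 ^ k) M g (sgnv k) q = sum (sgnv k) Fg" unfolding hz_map_def Fg_def using q by simp
  have iF: "i \<in> Ff" using i unfolding Ff_def q_def by simp
  have cF: "\<And>t. t \<in> Ff \<Longrightarrow> sgnv k t = sgnv k i"
  proof -
    fix t assume t: "t \<in> Ff"
    then have tt: "1 \<le> t" "t \<le> 2 ^ k" "f t = f i" unfolding Ff_def q_def by auto
    then have "in_Aplus t = in_Aplus i" using rf[unfolded redm_def, rule_format, of t i] i fi by simp
    then show "sgnv k t = sgnv k i" using sgn_eq_iff[of t k i] t i unfolding Ff_def by auto
  qed
  have sf: "sum (sgnv k) Ff = sgnv k i * int (card Ff)" by (rule sum_const_sgn[OF cF])
  have "finite Ff" unfolding Ff_def by simp
  then have "card Ff \<noteq> 0" using iF by auto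
  then have cardF: "card Ff \<ge> 1" by simp
  have si: "sgnv k i = 1 \<or> sgnv k i = -1" using sgn_val[OF i] by auto
  have "Fg \<noteq> {}"
  proof
    assume "Fg = {}"
    then have "sum (sgnv k) Ff = 0" using hf hg hz by simp
    then show False using sf cardF si by auto
  qed
  then obtain j0 where j0: "j0 \<in> Fg" by auto
  have j0r: "1 \<le> j0" "j0 \<le> 2 ^ k" using j0 unfolding Fg_def by auto
  have cG: "\<And>t. t \<in> Fg \<Longrightarrow> sgnv k t = sgnv k j0"
  proof -
    fix t assume t: "t \<in> Fg"
    then have tt: "1 \<le> t" "t \<le> 2 ^ k" "g t = g j0" using j0 unfolding Fg_def by auto
    then have "in_Aplus t = in_Aplus j0" using rg[unfolded redm_def, rule_format, of t j0] j0r j0 q unfolding Fg_def by simp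
    then show "sgnv k t = sgnv k j0" using sgn_eq_iff[of t k j0] t j0 unfolding Fg_def by auto
  qed
  have sg: "sum (sgnv k) Fg = sgnv k j0 * int (card Fg)" by (rule sum_const_sgn[OF cG])
  have "finite Fg" unfolding Fg_def by simp
  then have "card Fg \<noteq> 0" using j0 by auto
  then have cardG: "card Fg \<ge> 1" by simp
  have sj0: "sgnv k j0 = 1 \<or> sgnv k j0 = -1" using sgn_val[OF j0r] by auto
  have eq: "sgnv k i * int (card Ff) = sgnv k j0 * int (card Fg)" using sf sg hf hg hz by simp
  have same: "sgnv k j0 = sgnv k i"
  proof (rule ccontr)
    assume ne: "sgnv k j0 \<noteq> sgnv k i"
    then have "(sgnv k i = 1 \<and> sgnv k j0 = -1) \<or> (sgnv k i = -1 \<and> sgnv k j0 = 1)" using si sj0 by auto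
    then show False
    proof
      assume "sgnv k i = 1 \<and> sgnv k j0 = -1"
      then have "int (card Ff) = - int (card Fg)" using eq by simp
      then show False using cardF cardG by linarith
    next
      assume "sgnv k i = -1 \<and> sgnv k j0 = 1"
      then have "- int (card Ff) = int (card Fg)" using eq by simp
      then show False using cardF cardG by linarith
    qed
  qed
  have cardeq: "card Fg = card Ff"
  proof -
    have "sgnv k i * int (card Ff) = sgnv k i * int (card Fg)" using eq same by simp
    then have "int (card Ff) = int (card Fg)" using si by auto
    then show ?thesis by simp
  qed
  have "\<exists>j\<in>Fg. j \<notin> Ff"
  proof (rule ccontr)
    assume "\<not> (\<exists>j\<in>Fg. j \<notin> Ff)"
    then have "Fg \<subseteq> Ff - {i}" using fgi unfolding Fg_def q_def by auto
    then have "card Fg \<le> card (Ff - {i})" by (intro card_mono) (auto simp: Ff_def)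
    also have "\<dots> < card Ff" by (rule card_Diff1_less[OF _ iF]) (simp add: Ff_def)
    finally show False using cardeq by simp
  qed
  then obtain j where j: "j \<in> Fg" "j \<notin> Ff" by blast
  have jr: "1 \<le> j" "j \<le> 2 ^ k" "g j = q" using j unfolding Fg_def by auto
  have fj: "f j \<noteq> q" using j jr unfolding Ff_def by auto
  have sij: "in_Aplus i = in_Aplus j"
    using cG[OF j(1)] same sgn_eq_iff[of i k j] i jr by auto
  note T = tr_props[OF i jr(1,2) sij]
  define g' where "g' = g \<circ> trsw i j"
  have pm': "pointed_map (2 ^ k) M g'" unfolding g'_def by (rule pm_comp[OF T(4) g])
  have gm: "gmap R (2 ^ k) M g' n (x k) = gmap R (2 ^ k) M g n (x k)"
    unfolding g'_def by (rule perm_inv[OF k T(1,2,3) g])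
  have hz': "hz_map (2 ^ k) M g' (sgnv k) = hz_map (2 ^ k) M g (sgnv k)"
    unfolding g'_def using hz_map_comp[OF T(4) g, of "sgnv k"] hz_map_perm[OF T(1,2,3)] by simp
  have red': "redm k g'" unfolding redm_def
  proof (intro allI impI)
    fix a b assume a: "1 \<le> a" "a \<le> 2 ^ k" and b: "1 \<le> b" "b \<le> 2 ^ k" and e: "g' a = g' b" and nz: "g' a \<noteq> 0"
    have ta: "1 \<le> trsw i j a" "trsw i j a \<le> 2 ^ k" and tb: "1 \<le> trsw i j b" "trsw i j b \<le> 2 ^ k"
      using a b i jr unfolding trsw_def by auto
    have "in_Aplus (trsw i j a) = in_Aplus (trsw i j b)"
      using rg[unfolded redm_def, rule_format, OF ta tb] e nz unfolding g'_def by simp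
    then show "in_Aplus a = in_Aplus b" using T(3) a b by auto
  qed
  have D: "Dset k f g' \<subset> Dset k f g"
  proof
    show "Dset k f g' \<subseteq> Dset k f g"
    proof
      fix t assume t: "t \<in> Dset k f g'"
      show "t \<in> Dset k f g"
      proof (cases "t = i")
        case True then show ?thesis using t jr unfolding Dset_def g'_def trsw_def q_def by auto
      next
        case False
        show ?thesis
        proof (cases "t = j")
          case True then show ?thesis using jr fj unfolding Dset_def by auto
        next
          case False then show ?thesis using t \<open>t \<noteq> i\<close> unfolding Dset_def g'_def trsw_def by auto
        qed
      qed
    qed
    have "i \<in> Dset k f g" using i fgi unfolding Dset_def by auto
    moreover have "i \<notin> Dset k f g'" using jr unfolding Dset_def g'_def trsw_def q_def by auto
    ultimately show "Dset k f g' \<noteq> Dset k f g" by blast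
  qed
  show ?thesis using pm' red' hz' gm D by blast
qed

lemma red_unique:
  assumes k: "1 \<le> k"
  shows "pointed_map (2 ^ k) M f \<Longrightarrow> pointed_map (2 ^ k) M g \<Longrightarrow> redm k f \<Longrightarrow> redm k g \<Longrightarrow>
     hz_map (2 ^ k) M f (sgnv k) = hz_map (2 ^ k) M g (sgnv k) \<Longrightarrow>
     gmap R (2 ^ k) M f n (x k) = gmap R (2 ^ k) M g n (x k)"
proof (induction "card (Dset k f g)" arbitrary: f g rule: less_induct)
  case less
  note f = less.prems(1) and g = less.prems(2) and rf = less.prems(3) and rg = less.prems(4) and hz = less.prems(5)
  show ?case
  proof (cases "Dset k f g = {}")
    case True
    show ?thesis
    proof (rule gmap_cong[OF _ x_in])
      fix t :: nat assume t: "t \<le> 2 ^ k"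
      show "f t = g t"
      proof (cases "t = 0")
        case True then show ?thesis using f g unfolding pointed_map_def by simp
      next
        case False then show ?thesis using t \<open>Dset k f g = {}\<close> unfolding Dset_def by auto
      qed
    qed
  next
    case False
    then obtain t where t: "t \<in> Dset k f g" by auto
    then have tr': "1 \<le> t" "t \<le> 2 ^ k" "f t \<noteq> g t" unfolding Dset_def by auto
    show ?thesis
    proof (cases "f t = 0")
      case False
      obtain g' where g': "pointed_map (2 ^ k) M g'" "redm k g'" "hz_map (2 ^ k) M g' (sgnv k) = hz_map (2 ^ k) M g (sgnv k)"
        "gmap R (2 ^ k) M g' n (x k) = gmap R (2 ^ k) M g n (x k)" "Dset k f g' \<subset> Dset k f g"
        using step_swap[OF k f g rf rg hz tr'(1,2) False tr'(3)] by blast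
      have "card (Dset k f g') < card (Dset k f g)" using g'(5) Dset_fin by (simp add: psubset_card_mono)
      from less.hyps[OF this f g'(1) rf g'(2)] g'(3) hz g'(4) show ?thesis by simp
    next
      case True
      then have gt: "g t \<noteq> 0" "g t \<noteq> f t" using tr' by auto
      obtain f' where f': "pointed_map (2 ^ k) M f'" "redm k f'" "hz_map (2 ^ k) M f' (sgnv k) = hz_map (2 ^ k) M f (sgnv k)"
        "gmap R (2 ^ k) M f' n (x k) = gmap R (2 ^ k) M f n (x k)" "Dset k g f' \<subset> Dset k g f"
        using step_swap[OF k g f rg rf hz[symmetric] tr'(1,2) gt] by blast
      have "card (Dset k f' g) < card (Dset k f g)" using f'(5) Dset_fin Dset_sym
        by (metis psubset_card_mono)
      from less.hyps[OF this f'(1) g f'(2) rg] f'(3) hz f'(4) show ?thesis by simp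
    qed
  qed
qed

lemma wd:
  assumes f: "pointed_map (2 ^ a) M f" and g: "pointed_map (2 ^ b) M g"
    and hz: "hz_map (2 ^ a) M f (sgnv a) = hz_map (2 ^ b) M g (sgnv b)"
  shows "gmap R (2 ^ a) M f n (x a) = gmap R (2 ^ b) M g n (x b)"
proof -
  define K where "K = Suc (max a b)"
  have aK: "a \<le> K" and bK: "b \<le> K" and k: "1 \<le> K" unfolding K_def by auto
  have f1: "pointed_map (2 ^ K) M (f \<circ> truncm a)" by (rule pm_comp[OF trunc_pm f])
  have g1: "pointed_map (2 ^ K) M (g \<circ> truncm b)" by (rule pm_comp[OF trunc_pm g])
  obtain f' where f': "pointed_map (2 ^ K) M f'" "redm K f'" "hz_map (2 ^ K) M f' (sgnv K) = hz_map (2 ^ K) M (f \<circ> truncm a) (sgnv K)"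
    "gmap R (2 ^ K) M f' n (x K) = gmap R (2 ^ K) M (f \<circ> truncm a) n (x K)"
    using reduce[OF k f1] by blast
  obtain g' where g': "pointed_map (2 ^ K) M g'" "redm K g'" "hz_map (2 ^ K) M g' (sgnv K) = hz_map (2 ^ K) M (g \<circ> truncm b) (sgnv K)"
    "gmap R (2 ^ K) M g' n (x K) = gmap R (2 ^ K) M (g \<circ> truncm b) n (x K)"
    using reduce[OF k g1] by blast
  have "hz_map (2 ^ K) M f' (sgnv K) = hz_map (2 ^ K) M g' (sgnv K)"
    using f'(3) g'(3) hz_raise[OF aK f] hz_raise[OF bK g] hz by simp
  then have "gmap R (2 ^ K) M f' n (x K) = gmap R (2 ^ K) M g' n (x K)"
    by (rule red_unique[OF k f'(1) g'(1) f'(2) g'(2)])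
  then show ?thesis using f'(4) g'(4) raise_le[OF aK f] raise_le[OF bK g] by simp
qed

end



definition phiC :: "'a gring \<Rightarrow> nat \<Rightarrow> 'a \<Rightarrow> nat \<Rightarrow> (nat \<Rightarrow> int) \<Rightarrow> 'a" where
  "phiC R n r m v = (if v \<in> hz_elts m then
     (let kf = (SOME kf. pointed_map (2 ^ fst kf) m (snd kf) \<and> hz_map (2 ^ fst kf) m (snd kf) (sgnv (fst kf)) = v)
      in gmap R (2 ^ fst kf) m (snd kf) n (rpow R n r (fst kf))) else undefined)"

context FDL begin

lemma rpow_add: "gmul R (2 ^ a) (2 ^ b) n (x a) (x b) = x (a + b)"
proof (induction b)
  case 0 then show ?case using one_r[OF x_in] by simp
next
  case (Suc b)
  have "x (a + Suc b) = gmul R (2 ^ (a + b)) 2 n (x (a + b)) r" by simp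
  also have "\<dots> = gmul R (2 ^ a * 2 ^ b) 2 n (gmul R (2 ^ a) (2 ^ b) n (x a) (x b)) r"
    by (simp add: Suc.IH power_add)
  also have "\<dots> = gmul R (2 ^ a) (2 ^ b * 2) n (x a) (gmul R (2 ^ b) 2 n (x b) r)"
    by (rule assoc[OF x_in x_in r_in])
  also have "\<dots> = gmul R (2 ^ a) (2 ^ Suc b) n (x a) (x (Suc b))" by (simp add: mult.commute)
  finally show ?case by simp
qed

lemma phi_eq:
  assumes f: "pointed_map (2 ^ k) m f"
  shows "phiC R n r m (hz_map (2 ^ k) m f (sgnv k)) = gmap R (2 ^ k) m f n (x k)"
proof -
  let ?v = "hz_map (2 ^ k) m f (sgnv k)"
  let ?P = "\<lambda>kf. pointed_map (2 ^ fst kf) m (snd kf) \<and> hz_map (2 ^ fst kf) m (snd kf) (sgnv (fst kf)) = ?v"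
  have ex: "\<exists>kf. ?P kf" using f by (intro exI[of _ "(k, f)"]) simp
  have P: "?P (SOME kf. ?P kf)" by (rule someI_ex[OF ex])
  have "phiC R n r m ?v = gmap R (2 ^ fst (SOME kf. ?P kf)) m (snd (SOME kf. ?P kf)) n (x (fst (SOME kf. ?P kf)))"
    unfolding phiC_def using hz_map_in by (simp add: Let_def)
  also have "\<dots> = gmap R (2 ^ k) m f n (x k)"
    by (rule wd) (use P f in auto)
  finally show ?thesis .
qed

lemma phi_mult: "mult_map R n (phiC R n r)"
  unfolding mult_map_def
proof (intro conjI allI impI)
  fix m v assume v: "v \<in> hz_elts m"
  obtain k f where kf: "pointed_map (2 ^ k) m f" "hz_map (2 ^ k) m f (sgnv k) = v" using rep_exists[OF v] by blast
  show "phiC R n r m v \<in> gelts R m n" using phi_eq[OF kf(1)] kf(2) gmap_in[OF kf(1) x_in] by simp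
next
  fix m v assume "v \<notin> hz_elts m" then show "phiC R n r m v = undefined" unfolding phiC_def by simp
next
  fix m
  have "hz_map (2 ^ 0) m (\<lambda>_. 0) (sgnv 0) = (\<lambda>_. 0)" by (rule hz_map_const0)
  then show "phiC R n r m (\<lambda>_. 0) = gbase R m n"
    using phi_eq[OF pm_const0[of "2 ^ 0" m]] gmap_const0[OF x_in[of 0]] by simp
next
  fix m k f v assume a: "pointed_map m k f \<and> v \<in> hz_elts m"
  obtain a g where ag: "pointed_map (2 ^ a) m g" "hz_map (2 ^ a) m g (sgnv a) = v" using rep_exists a by blast
  have "hz_map m k f v = hz_map (2 ^ a) k (f \<circ> g) (sgnv a)" using hz_map_comp[OF ag(1)] a ag(2) by blast
  then have "phiC R n r k (hz_map m k f v) = gmap R (2 ^ a) k (f \<circ> g) n (x a)"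
    using phi_eq[OF pm_comp[OF ag(1)]] a by simp
  also have "\<dots> = gmap R m k f n (gmap R (2 ^ a) m g n (x a))" using gmap_comp[OF ag(1) _ x_in] a by simp
  also have "\<dots> = gmap R m k f n (phiC R n r m v)" using phi_eq[OF ag(1)] ag(2) by simp
  finally show "phiC R n r k (hz_map m k f v) = gmap R m k f n (phiC R n r m v)" .
next
  have "hz_map (2 ^ 0) 1 id (sgnv 0) = hz_one" using hz_map_id[OF sgn_in[of 0]] sgn0 by simp
  then show "phiC R n r 1 hz_one = gone R n" using phi_eq[OF pm_id, of 0] gmap_id[OF x_in[of 0]] by simp
next
  fix m k v w assume a: "v \<in> hz_elts m \<and> w \<in> hz_elts k"
  obtain a f where af: "pointed_map (2 ^ a) m f" "hz_map (2 ^ a) m f (sgnv a) = v" using rep_exists a by blast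
  obtain b g where bg: "pointed_map (2 ^ b) k g" "hz_map (2 ^ b) k g (sgnv b) = w" using rep_exists a by blast
  have pm: "pointed_map (2 ^ (a + b)) (m * k) (smash_map (2 ^ a) (2 ^ b) m f g)"
    using pm_smash[OF af(1) bg(1)] by (simp add: power_add)
  have "hz_mul m k v w = hz_map (2 ^ a * 2 ^ b) (m * k) (smash_map (2 ^ a) (2 ^ b) m f g) (hz_mul (2 ^ a) (2 ^ b) (sgnv a) (sgnv b))"
    using hz_mul_smash[OF af(1) bg(1)] af(2) bg(2) by simp
  then have hv: "hz_mul m k v w = hz_map (2 ^ (a + b)) (m * k) (smash_map (2 ^ a) (2 ^ b) m f g) (sgnv (a + b))"
    using sgn_mul by (simp add: power_add)
  have "phiC R n r (m * k) (hz_mul m k v w) = gmap R (2 ^ (a + b)) (m * k) (smash_map (2 ^ a) (2 ^ b) m f g) n (x (a + b))"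
    unfolding hv by (rule phi_eq[OF pm])
  also have "\<dots> = gmap R (2 ^ a * 2 ^ b) (m * k) (smash_map (2 ^ a) (2 ^ b) m f g) n (gmul R (2 ^ a) (2 ^ b) n (x a) (x b))"
    using rpow_add by (simp add: power_add)
  also have "\<dots> = gmul R m k n (gmap R (2 ^ a) m f n (x a)) (gmap R (2 ^ b) k g n (x b))"
    by (rule gmul_smash[OF af(1) bg(1) x_in x_in])
  also have "\<dots> = gmul R m k n (phiC R n r m v) (phiC R n r k w)"
    using phi_eq[OF af(1)] phi_eq[OF bg(1)] af(2) bg(2) by simp
  finally show "phiC R n r (m * k) (hz_mul m k v w) = gmul R m k n (phiC R n r m v) (phiC R n r k w)" .
qed

lemma phi_r: "phiC R n r 2 (sgnv 1) = r"
proof -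
  have "hz_map (2 ^ 1) 2 id (sgnv 1) = sgnv 1" using hz_map_id[OF sgn_in[of 1]] by simp
  then have "phiC R n r 2 (sgnv 1) = gmap R (2 ^ 1) 2 id n (x 1)" using phi_eq[OF pm_id, of 1] by simp
  also have "\<dots> = r" using gmap_id[OF x_in[of 1]] one_l[OF r_in] by simp
  finally show ?thesis .
qed

end



lemma sgn1: "sgnv 1 = (\<lambda>p. if p = 1 then 1 else if p = 2 then -1 else 0)"
proof (rule ext)
  fix p :: nat
  have b1: "bitcount 1 = 1" using bc_step[of 1] bc0 by simp
  show "sgnv 1 p = (if p = 1 then 1 else if p = 2 then -1 else 0)"
    unfolding sgnv_def in_Aplus_def using b1 bc0 by auto
qed

lemma sgn1v: "sgnv (Suc 0) (Suc 0) = 1" "sgnv (Suc 0) 2 = -1"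
  using sgn1 by (simp_all add: fun_eq_iff)

lemma sum2: "sum v {i. 1 \<le> i \<and> i \<le> (2::nat) \<and> P i} = (if P 1 then v 1 else 0) + (if P 2 then v 2 else 0)"
proof -
  have e: "{i. 1 \<le> i \<and> i \<le> (2::nat) \<and> P i} = (if P 1 then {1} else {}) \<union> (if P 2 then {2} else {})"
    by (auto simp: le_Suc_eq numeral_2_eq_2)
  show ?thesis unfolding e by (auto simp: add.commute)
qed

lemma pm_swap2: "pointed_map 2 2 swap2" unfolding pointed_map_def swap2_def by auto

lemma hz_c1: "hz_map 2 1 (p_map 2) (sgnv 1) = hz_one"
proof (rule ext)
  fix j
  show "hz_map 2 1 (p_map 2) (sgnv 1) j = hz_one j"
  proof (cases "j = 1")
    case True then show ?thesis by (simp only: hz_map_def sum2) (simp add: sgn1v p_map_def hz_one_def)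
  next
    case False then show ?thesis using hz_map_out[of j 1] unfolding hz_one_def by auto
  qed
qed

lemma hz_c2: "hz_map 2 1 (s_map 1 2 1) (sgnv 1) = (\<lambda>_. 0)"
proof (rule ext)
  fix j
  show "hz_map 2 1 (s_map 1 2 1) (sgnv 1) j = 0"
  proof (cases "j = 1")
    case True then show ?thesis by (simp only: hz_map_def sum2) (simp add: sgn1v s_map_def)
  next
    case False then show ?thesis using hz_map_out[of j 1] by auto
  qed
qed

definition uuv :: "nat \<Rightarrow> int" where "uuv = (\<lambda>j. if j = 1 then -1 else 0)"
definition wwv :: "nat \<Rightarrow> int" where "wwv = (\<lambda>p. if p = 1 then -1 else if p = 2 then 1 else 0)"

lemma hz_c3: "hz_map 2 1 (p_map 1) (sgnv 1) = uuv"
proof (rule ext)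
  fix j
  show "hz_map 2 1 (p_map 1) (sgnv 1) j = uuv j"
  proof (cases "j = 1")
    case True then show ?thesis by (simp only: hz_map_def sum2) (simp add: sgn1v p_map_def uuv_def)
  next
    case False then show ?thesis using hz_map_out[of j 1] unfolding uuv_def by auto
  qed
qed

lemma hz_c4: "hz_map 2 2 swap2 (sgnv 1) = wwv"
proof (rule ext)
  fix j
  show "hz_map 2 2 swap2 (sgnv 1) j = wwv j"
  proof (cases "j = 1 \<or> j = 2")
    case True then show ?thesis by (simp only: hz_map_def sum2) (auto simp: sgn1v swap2_def wwv_def)
  next
    case False then show ?thesis using hz_map_out[of j 2] unfolding wwv_def by auto
  qed
qed

lemma hz_c5: "hz_mul 1 2 uuv (sgnv 1) = wwv" "hz_mul 2 1 (sgnv 1) uuv = wwv"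
  unfolding hz_mul_def uuv_def wwv_def sgn1 by (auto intro!: ext simp: le_Suc_eq numeral_2_eq_2)


context GR begin

lemma mm_sgn:
  assumes phi: "mult_map R n \<phi>"
  shows "\<phi> (2 ^ k) (sgnv k) = rpow R n (\<phi> 2 (sgnv 1)) k"
proof (induction k)
  case 0 then show ?case using phi sgn0 unfolding mult_map_def by simp
next
  case (Suc k)
  have "sgnv (Suc k) = hz_mul (2 ^ k) 2 (sgnv k) (sgnv 1)" using sgn_mul[of k 1] by simp
  then have "\<phi> (2 ^ k * 2) (sgnv (Suc k)) = gmul R (2 ^ k) 2 n (\<phi> (2 ^ k) (sgnv k)) (\<phi> 2 (sgnv 1))"
    using phi sgn_in[of k] sgn_in[of 1] unfolding mult_map_def by simp
  then show ?case using Suc by (simp add: mult.commute)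
qed

lemma mm_in: "mult_map R n \<phi> \<Longrightarrow> v \<in> hz_elts m \<Longrightarrow> \<phi> m v \<in> gelts R m n"
  unfolding mult_map_def by blast

lemma mm_nat: "mult_map R n \<phi> \<Longrightarrow> pointed_map m k f \<Longrightarrow> v \<in> hz_elts m \<Longrightarrow>
    \<phi> k (hz_map m k f v) = gmap R m k f n (\<phi> m v)"
  unfolding mult_map_def by blast

lemma mm_mul: "mult_map R n \<phi> \<Longrightarrow> v \<in> hz_elts m \<Longrightarrow> w \<in> hz_elts k \<Longrightarrow>
    \<phi> (m * k) (hz_mul m k v w) = gmul R m k n (\<phi> m v) (\<phi> k w)"
  unfolding mult_map_def by blast

lemma mm_fdl:
  assumes phi: "mult_map R n \<phi>"
  shows "is_fdl R n (\<phi> 2 (sgnv 1))"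
proof -
  define r where "r = \<phi> 2 (sgnv 1)"
  have s1: "sgnv 1 \<in> hz_elts 2" using sgn_in[of 1] by simp
  have X: "\<And>k. \<phi> (2 ^ k) (sgnv k) = rpow R n r k" unfolding r_def by (rule mm_sgn[OF phi])
  have pm21: "pointed_map 2 1 (p_map 2)" "pointed_map 2 1 (p_map 1)" using pm_p[of 2 2] pm_p[of 1 2] by auto
  have pms: "pointed_map 2 1 (s_map 1 2 1)" using pm_s[of 1 2 2 1] by simp
  have c0: "r \<in> gelts R 2 n" unfolding r_def by (rule mm_in[OF phi s1])
  have c1: "gmap R 2 1 (p_map 2) n r = gone R n"
    using mm_nat[OF phi pm21(1) s1] hz_c1 phi unfolding r_def mult_map_def by simp
  have c2: "gmap R 2 1 (s_map 1 2 1) n r = gbase R 1 n"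
    using mm_nat[OF phi pms s1] hz_c2 phi unfolding r_def mult_map_def by simp
  have u: "gmap R 2 1 (p_map 1) n r = \<phi> 1 uuv" using mm_nat[OF phi pm21(2) s1] hz_c3 unfolding r_def by simp
  have uh: "uuv \<in> hz_elts 1" using hz_c3 hz_map_in by metis
  have sw: "gmap R 2 2 swap2 n r = \<phi> 2 wwv" using mm_nat[OF phi pm_swap2 s1] hz_c4 unfolding r_def by simp
  have c3: "gmul R 1 2 n (gmap R 2 1 (p_map 1) n r) r = gmap R 2 2 swap2 n r"
    using mm_mul[OF phi uh s1] hz_c5(1) u sw unfolding r_def by simp
  have c4: "gmul R 2 1 n r (gmap R 2 1 (p_map 1) n r) = gmap R 2 2 swap2 n r"
    using mm_mul[OF phi s1 uh] hz_c5(2) u sw unfolding r_def by simp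
  have c5: "\<forall>k \<pi>. 1 \<le> k \<and> \<pi> 0 = 0 \<and> bij_betw \<pi> {1..2 ^ k} {1..2 ^ k} \<and>
        (\<forall>i\<in>{1..2 ^ k}. in_Aplus (\<pi> i) = in_Aplus i) \<longrightarrow>
        gmap R (2 ^ k) (2 ^ k) \<pi> n (rpow R n r k) = rpow R n r k"
  proof (intro allI impI)
    fix k :: nat and \<pi> assume a: "1 \<le> k \<and> \<pi> 0 = 0 \<and> bij_betw \<pi> {1..2 ^ k} {1..2 ^ k} \<and> (\<forall>i\<in>{1..2 ^ k}. in_Aplus (\<pi> i) = in_Aplus i)"
    have pm: "pointed_map (2 ^ k) (2 ^ k) \<pi>" unfolding pointed_map_def
    proof (intro conjI allI impI)
      fix i :: nat assume "i \<le> 2 ^ k"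
      then show "\<pi> i \<le> 2 ^ k" using a unfolding bij_betw_def by (cases "i = 0") auto
    qed (use a in simp)
    have "gmap R (2 ^ k) (2 ^ k) \<pi> n (rpow R n r k) = \<phi> (2 ^ k) (hz_map (2 ^ k) (2 ^ k) \<pi> (sgnv k))"
      using mm_nat[OF phi pm sgn_in] X by simp
    also have "\<dots> = rpow R n r k" using hz_map_perm[of \<pi> k] a X by simp
    finally show "gmap R (2 ^ k) (2 ^ k) \<pi> n (rpow R n r k) = rpow R n r k" .
  qed
  have c6: "\<forall>k i j l. 1 \<le> k \<and> 1 \<le> i \<and> i < j \<and> j \<le> 2 ^ k \<and> in_Aplus i \<noteq> in_Aplus j \<and>
        1 \<le> l \<and> l \<le> 2 ^ k - 1 \<longrightarrow>
        gmap R (2 ^ k) (2 ^ k - 1) (s_map i j l) n (rpow R n r k) =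
        gmap R (2 ^ k - 2) (2 ^ k - 1) (d_map l) n
          (gmap R (2 ^ k - 1) (2 ^ k - 2) (p_map i) n
            (gmap R (2 ^ k) (2 ^ k - 1) (p_map j) n (rpow R n r k)))"
  proof (intro allI impI)
    fix k i j l :: nat assume a: "1 \<le> k \<and> 1 \<le> i \<and> i < j \<and> j \<le> 2 ^ k \<and> in_Aplus i \<noteq> in_Aplus j \<and> 1 \<le> l \<and> l \<le> 2 ^ k - 1"
    define N :: nat where "N = 2 ^ k"
    have a': "1 \<le> i" "i < j" "j \<le> N" "1 \<le> l" "l \<le> N - 1" "in_Aplus i \<noteq> in_Aplus j" using a unfolding N_def by auto
    have spm: "pointed_map N (N - 1) (s_map i j l)" using pm_s[OF a'(1-5)] .
    have pjm: "pointed_map N (N - 1) (p_map j)" using pm_p[of j N] a' by simp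
    have "i \<le> N - 1" using a' by simp
    then have "pointed_map (N - 1) (N - 1 - 1) (p_map i)" using pm_p a'(1) by blast
    then have pim: "pointed_map (N - 1) (N - 2) (p_map i)" by (simp add: numeral_2_eq_2)
    have "pointed_map (N - 1 - 1) (N - 1) (d_map l)" using pm_d[of l "N - 1"] a' by simp
    then have dm: "pointed_map (N - 2) (N - 1) (d_map l)" by (simp add: numeral_2_eq_2)
    have sk: "sgnv k \<in> hz_elts N" using sgn_in unfolding N_def .
    have rk: "rpow R n r k = \<phi> N (sgnv k)" using X unfolding N_def by simp
    have h1: "hz_map N (N - 1) (p_map j) (sgnv k) \<in> hz_elts (N - 1)" by (rule hz_map_in)
    have h2: "hz_map (N - 1) (N - 2) (p_map i) (hz_map N (N - 1) (p_map j) (sgnv k)) \<in> hz_elts (N - 2)" by (rule hz_map_in)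
    have L: "gmap R N (N - 1) (s_map i j l) n (rpow R n r k) = \<phi> (N - 1) (hz_map N (N - 1) (s_map i j l) (sgnv k))"
      using mm_nat[OF phi spm sk] rk by simp
    have Rr: "gmap R (N - 2) (N - 1) (d_map l) n (gmap R (N - 1) (N - 2) (p_map i) n (gmap R N (N - 1) (p_map j) n (rpow R n r k)))
       = \<phi> (N - 1) (hz_map (N - 2) (N - 1) (d_map l) (hz_map (N - 1) (N - 2) (p_map i) (hz_map N (N - 1) (p_map j) (sgnv k))))"
      using mm_nat[OF phi pjm sk] mm_nat[OF phi pim h1] mm_nat[OF phi dm h2] rk by simp
    have hzc: "hz_map (N - 2) (N - 1) (d_map l) (hz_map (N - 1) (N - 2) (p_map i) (hz_map N (N - 1) (p_map j) (sgnv k)))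
        = hz_map N (N - 1) (d_map l \<circ> p_map i \<circ> p_map j) (sgnv k)"
      using hz_map_comp[OF pim dm] hz_map_comp[OF pjm pm_comp[OF pim dm]] by (simp add: o_assoc)
    have sij: "sgnv k i + sgnv k j = 0" using a' sgn_val[of i k] sgn_val[of j k] unfolding N_def by auto
    have "hz_map N (N - 1) (s_map i j l) (sgnv k) = hz_map N (N - 1) (d_map l \<circ> p_map i \<circ> p_map j) (sgnv k)"
    proof (rule hz_map_kill[where i = i and j = j])
      fix t assume "t \<noteq> i" "t \<noteq> j"
      then show "(d_map l \<circ> p_map i \<circ> p_map j) t = s_map i j l t" using ar1[OF a'(1,2,3,4)] by simp
    qed (use a' sij ar2[OF a'(1,2,4)] ar3(1,2)[OF a'(1,2)] in auto)
    then show "gmap R (2 ^ k) (2 ^ k - 1) (s_map i j l) n (rpow R n r k) =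
        gmap R (2 ^ k - 2) (2 ^ k - 1) (d_map l) n
          (gmap R (2 ^ k - 1) (2 ^ k - 2) (p_map i) n
            (gmap R (2 ^ k) (2 ^ k - 1) (p_map j) n (rpow R n r k)))"
      using L Rr hzc unfolding N_def by simp
  qed
  show ?thesis unfolding is_fdl_def r_def[symmetric] using c0 c1 c2 c3 c4 c5 c6 by blast
qed

end



definition PhiD :: "'a gring \<Rightarrow> nat \<Rightarrow> 'a \<Rightarrow> (nat \<Rightarrow> (nat \<Rightarrow> int) \<Rightarrow> 'a)" where
  "PhiD R n r = (THE \<phi>. mult_map R n \<phi> \<and> \<phi> 2 (sgnv 1) = r)"

lemma smash_r1: "pointed_map m k f \<Longrightarrow> p \<le> m \<Longrightarrow> smash_map m 1 k f id p = f p"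
proof -
  assume f: "pointed_map m k f" and p: "p \<le> m"
  show ?thesis
  proof (cases "p = 0")
    case True then show ?thesis using f unfolding smash_map_def pointed_map_def by simp
  next
    case False
    then have "(p - 1) mod m = p - 1" "(p - 1) div m = 0" using p by auto
    then show ?thesis using False p unfolding smash_map_def Let_def by auto
  qed
qed

lemma smash_l1: "pointed_map m k f \<Longrightarrow> p \<le> m \<Longrightarrow> smash_map 1 m 1 id f p = f p"
proof -
  assume f: "pointed_map m k f" and p: "p \<le> m"
  show ?thesis
  proof (cases "p = 0")
    case True then show ?thesis using f unfolding smash_map_def pointed_map_def by simp
  next
    case False
    then show ?thesis using p unfolding smash_map_def Let_def by auto
  qed
qed

context GR begin

lemma mm_unique:
  assumes phi: "mult_map R n \<phi>" and psi: "mult_map R n \<psi>" and e: "\<phi> 2 (sgnv 1) = \<psi> 2 (sgnv 1)"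
  shows "\<phi> = \<psi>"
proof (intro ext)
  fix m v
  show "\<phi> m v = \<psi> m v"
  proof (cases "v \<in> hz_elts m")
    case False then show ?thesis using phi psi unfolding mult_map_def by simp
  next
    case True
    obtain k f where kf: "pointed_map (2 ^ k) m f" "hz_map (2 ^ k) m f (sgnv k) = v" using rep_exists[OF True] by blast
    have "\<phi> m v = gmap R (2 ^ k) m f n (rpow R n (\<phi> 2 (sgnv 1)) k)"
      using mm_nat[OF phi kf(1) sgn_in] mm_sgn[OF phi] kf(2) by simp
    moreover have "\<psi> m v = gmap R (2 ^ k) m f n (rpow R n (\<psi> 2 (sgnv 1)) k)"
      using mm_nat[OF psi kf(1) sgn_in] mm_sgn[OF psi] kf(2) by simp
    ultimately show ?thesis using e by simp
  qed
qed

lemma Phi_of_mm: "mult_map R n \<phi> \<Longrightarrow> PhiD R n (\<phi> 2 (sgnv 1)) = \<phi>"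
  unfolding PhiD_def by (rule the_equality) (auto intro: mm_unique)

lemma Phi_fdl: "is_fdl R n r \<Longrightarrow> mult_map R n (PhiD R n r) \<and> PhiD R n r 2 (sgnv 1) = r"
proof -
  assume fd: "is_fdl R n r"
  interpret FDL R n r by unfold_locales (rule fd)
  have "PhiD R n (phiC R n r 2 (sgnv 1)) = phiC R n r" by (rule Phi_of_mm[OF phi_mult])
  then show ?thesis using phi_mult phi_r by simp
qed

lemma face_mm:
  assumes phi: "mult_map R n \<phi>" and ni: "1 \<le> n" "i \<le> n"
  shows "mult_map R (n - 1) (sface (hom_sset R) n i \<phi>)"
  unfolding mult_map_def hom_sset_def
proof (simp only: sset.select_convs, intro conjI allI impI)
  fix m v assume v: "v \<in> hz_elts m"
  show "(if v \<in> hz_elts m then gface R m n i (\<phi> m v) else undefined) \<in> gelts R m (n - 1)"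
    using face_in[OF ni mm_in[OF phi v]] v by simp
next
  fix m v assume "v \<notin> hz_elts m"
  then show "(if v \<in> hz_elts m then gface R m n i (\<phi> m v) else undefined) = undefined" by simp
next
  fix m
  have z: "(\<lambda>_. 0) \<in> hz_elts m" unfolding hz_elts_def by simp
  show "(if (\<lambda>_. 0) \<in> hz_elts m then gface R m n i (\<phi> m (\<lambda>_. 0)) else undefined) = gbase R m (n - 1)"
    using z phi face_base[OF ni] unfolding mult_map_def by simp
next
  fix m k f v assume a: "pointed_map m k f \<and> v \<in> hz_elts m"
  show "(if hz_map m k f v \<in> hz_elts k then gface R k n i (\<phi> k (hz_map m k f v)) else undefined) =
        gmap R m k f (n - 1) (if v \<in> hz_elts m then gface R m n i (\<phi> m v) else undefined)"
    using a hz_map_in mm_nat[OF phi] face_gmap[OF _ ni mm_in[OF phi]] by simp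
next
  have h1: "hz_one \<in> hz_elts 1" unfolding hz_one_def hz_elts_def by simp
  show "(if hz_one \<in> hz_elts 1 then gface R 1 n i (\<phi> 1 hz_one) else undefined) = gone R (n - 1)"
    using h1 phi face_one[OF ni] unfolding mult_map_def by simp
next
  fix m k v w assume a: "v \<in> hz_elts m \<and> w \<in> hz_elts k"
  show "(if hz_mul m k v w \<in> hz_elts (m * k) then gface R (m * k) n i (\<phi> (m * k) (hz_mul m k v w)) else undefined) =
        gmul R m k (n - 1) (if v \<in> hz_elts m then gface R m n i (\<phi> m v) else undefined)
          (if w \<in> hz_elts k then gface R k n i (\<phi> k w) else undefined)"
    using a hz_mul_in mm_mul[OF phi] face_gmul[OF ni mm_in[OF phi] mm_in[OF phi]] by simp
qed

lemma deg_mm: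
  assumes phi: "mult_map R n \<phi>" and ni: "i \<le> n"
  shows "mult_map R (Suc n) (sdeg (hom_sset R) n i \<phi>)"
  unfolding mult_map_def hom_sset_def
proof (simp only: sset.select_convs, intro conjI allI impI)
  fix m v assume v: "v \<in> hz_elts m"
  show "(if v \<in> hz_elts m then gdeg R m n i (\<phi> m v) else undefined) \<in> gelts R m (Suc n)"
    using deg_in[OF ni mm_in[OF phi v]] v by simp
next
  fix m v assume "v \<notin> hz_elts m"
  then show "(if v \<in> hz_elts m then gdeg R m n i (\<phi> m v) else undefined) = undefined" by simp
next
  fix m
  have z: "(\<lambda>_. 0) \<in> hz_elts m" unfolding hz_elts_def by simp
  show "(if (\<lambda>_. 0) \<in> hz_elts m then gdeg R m n i (\<phi> m (\<lambda>_. 0)) else undefined) = gbase R m (Suc n)"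
    using z phi deg_base[OF ni] unfolding mult_map_def by simp
next
  fix m k f v assume a: "pointed_map m k f \<and> v \<in> hz_elts m"
  show "(if hz_map m k f v \<in> hz_elts k then gdeg R k n i (\<phi> k (hz_map m k f v)) else undefined) =
        gmap R m k f (Suc n) (if v \<in> hz_elts m then gdeg R m n i (\<phi> m v) else undefined)"
    using a hz_map_in mm_nat[OF phi] deg_gmap[OF _ ni mm_in[OF phi]] by simp
next
  have h1: "hz_one \<in> hz_elts 1" unfolding hz_one_def hz_elts_def by simp
  show "(if hz_one \<in> hz_elts 1 then gdeg R 1 n i (\<phi> 1 hz_one) else undefined) = gone R (Suc n)"
    using h1 phi deg_one[OF ni] unfolding mult_map_def by simp
next
  fix m k v w assume a: "v \<in> hz_elts m \<and> w \<in> hz_elts k"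
  show "(if hz_mul m k v w \<in> hz_elts (m * k) then gdeg R (m * k) n i (\<phi> (m * k) (hz_mul m k v w)) else undefined) =
        gmul R m k (Suc n) (if v \<in> hz_elts m then gdeg R m n i (\<phi> m v) else undefined)
          (if w \<in> hz_elts k then gdeg R k n i (\<phi> k w) else undefined)"
    using a hz_mul_in mm_mul[OF phi] deg_gmul[OF ni mm_in[OF phi] mm_in[OF phi]] by simp
qed


lemma inv_unique:
  assumes a: "a \<in> gelts R 1 n" and b: "b \<in> gelts R 1 n" and b': "b' \<in> gelts R 1 n"
    and ba: "gmul R 1 1 n b a = gone R n" and ab': "gmul R 1 1 n a b' = gone R n"
  shows "b = b'"
proof -
  have "b = gmul R 1 1 n b (gmul R 1 1 n a b')" using ab' one_r[OF b] by simp
  also have "\<dots> = gmul R 1 1 n (gmul R 1 1 n b a) b'" using assoc[OF b a b'] by simp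
  also have "\<dots> = b'" using ba one_l[OF b'] by simp
  finally show ?thesis .
qed

lemma ginv_props:
  assumes a: "a \<in> units R n"
  shows "ginv R n a \<in> gelts R 1 n" "gmul R 1 1 n a (ginv R n a) = gone R n" "gmul R 1 1 n (ginv R n a) a = gone R n"
proof -
  obtain b where b: "b \<in> gelts R 1 n" "gmul R 1 1 n a b = gone R n" "gmul R 1 1 n b a = gone R n"
    using a unfolding units_def by blast
  have a1: "a \<in> gelts R 1 n" using a unfolding units_def by blast
  have "ginv R n a = b" unfolding ginv_def
    by (rule the_equality) (use b a1 inv_unique in blast)+
  then show "ginv R n a \<in> gelts R 1 n" "gmul R 1 1 n a (ginv R n a) = gone R n" "gmul R 1 1 n (ginv R n a) a = gone R n"
    using b by auto
qed

lemma conj_mul: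
  assumes x: "x \<in> gelts R m n" and y: "y \<in> gelts R k n" and a: "a \<in> gelts R 1 n" and b: "b \<in> gelts R 1 n"
    and ba: "gmul R 1 1 n b a = gone R n"
  shows "gmul R m k n (gmul R m 1 n (gmul R 1 m n a x) b) (gmul R k 1 n (gmul R 1 k n a y) b) =
         gmul R (m * k) 1 n (gmul R 1 (m * k) n a (gmul R m k n x y)) b"
proof -
  have X: "gmul R 1 m n a x \<in> gelts R m n" using gmul_in[OF a x] by simp
  have Ay: "gmul R 1 k n a y \<in> gelts R k n" using gmul_in[OF a y] by simp
  have Y': "gmul R k 1 n (gmul R 1 k n a y) b \<in> gelts R k n" using gmul_in[OF Ay b] by simp
  have s1: "gmul R m k n (gmul R m 1 n (gmul R 1 m n a x) b) (gmul R k 1 n (gmul R 1 k n a y) b)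
      = gmul R m k n (gmul R 1 m n a x) (gmul R 1 k n b (gmul R k 1 n (gmul R 1 k n a y) b))"
    using assoc[OF X b Y'] by simp
  have s2: "gmul R 1 k n b (gmul R 1 k n a y) = y" using assoc[OF b a y] ba one_l[OF y] by simp
  have s3: "gmul R 1 k n b (gmul R k 1 n (gmul R 1 k n a y) b) = gmul R k 1 n y b"
    using assoc[OF b Ay b] s2 by simp
  have s4: "gmul R m k n (gmul R 1 m n a x) (gmul R k 1 n y b) = gmul R (m * k) 1 n (gmul R m k n (gmul R 1 m n a x) y) b"
    using assoc[OF X y b] by simp
  have s5: "gmul R m k n (gmul R 1 m n a x) y = gmul R 1 (m * k) n a (gmul R m k n x y)"
    using assoc[OF a x y] by simp
  show ?thesis using s1 s3 s4 s5 by simp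
qed

lemma act_mm:
  assumes phi: "mult_map R n \<phi>" and a: "a \<in> units R n"
  shows "mult_map R n (hom_act R n a \<phi>)"
proof -
  note bi = ginv_props[OF a]
  define b where "b = ginv R n a"
  have a1: "a \<in> gelts R 1 n" using a unfolding units_def by blast
  have b1: "b \<in> gelts R 1 n" "gmul R 1 1 n a b = gone R n" "gmul R 1 1 n b a = gone R n" using bi unfolding b_def by auto
  have HA: "hom_act R n a \<phi> = (\<lambda>m v. if v \<in> hz_elts m then gmul R m 1 n (gmul R 1 m n a (\<phi> m v)) b else undefined)"
    unfolding hom_act_def b_def ..
  have cin: "gmul R m 1 n (gmul R 1 m n a y) b \<in> gelts R m n" if "y \<in> gelts R m n" for m y
    using gmul_in[OF gmul_in[OF a1 that] b1(1)] by simp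
  show ?thesis unfolding mult_map_def HA
  proof (intro conjI allI impI)
    fix m v assume v: "v \<in> hz_elts m"
    show "(if v \<in> hz_elts m then gmul R m 1 n (gmul R 1 m n a (\<phi> m v)) b else undefined) \<in> gelts R m n"
      using v cin[OF mm_in[OF phi v]] by simp
  next
    fix m v assume "v \<notin> hz_elts m"
    then show "(if v \<in> hz_elts m then gmul R m 1 n (gmul R 1 m n a (\<phi> m v)) b else undefined) = undefined" by simp
  next
    fix m
    have z: "(\<lambda>_. 0) \<in> hz_elts m" unfolding hz_elts_def by simp
    have "gmul R 1 m n a (gbase R m n) = gbase R m n" using gmul_base_r[OF a1, of m] by simp
    then show "(if (\<lambda>_. 0) \<in> hz_elts m then gmul R m 1 n (gmul R 1 m n a (\<phi> m (\<lambda>_. 0))) b else undefined) = gbase R m n"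
      using z phi gmul_base_l[OF b1(1), of m] unfolding mult_map_def by simp
  next
    fix m k f v assume fv: "pointed_map m k f \<and> v \<in> hz_elts m"
    then have f: "pointed_map m k f" and v: "v \<in> hz_elts m" by auto
    define y where "y = \<phi> m v"
    have y: "y \<in> gelts R m n" unfolding y_def by (rule mm_in[OF phi v])
    have Ay: "gmul R 1 m n a y \<in> gelts R m n" using gmul_in[OF a1 y] by simp
    have e1: "gmap R m k f n (gmul R m 1 n (gmul R 1 m n a y) b) = gmul R k 1 n (gmap R m k f n (gmul R 1 m n a y)) b"
    proof -
      have "gmap R (m * 1) (k * 1) (smash_map m 1 k f id) n (gmul R m 1 n (gmul R 1 m n a y) b) =
            gmul R k 1 n (gmap R m k f n (gmul R 1 m n a y)) (gmap R 1 1 id n b)"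
        by (rule gmul_smash[OF f pm_id Ay b1(1)])
      moreover have "gmap R m k (smash_map m 1 k f id) n (gmul R m 1 n (gmul R 1 m n a y) b) =
            gmap R m k f n (gmul R m 1 n (gmul R 1 m n a y) b)"
        by (rule gmap_cong[OF _ cin[OF y]]) (rule smash_r1[OF f])
      ultimately show ?thesis using gmap_id[OF b1(1)] by simp
    qed
    have e2: "gmap R m k f n (gmul R 1 m n a y) = gmul R 1 k n a (gmap R m k f n y)"
    proof -
      have "gmap R (1 * m) (1 * k) (smash_map 1 m 1 id f) n (gmul R 1 m n a y) =
            gmul R 1 k n (gmap R 1 1 id n a) (gmap R m k f n y)"
        by (rule gmul_smash[OF pm_id f a1 y])
      moreover have "gmap R m k (smash_map 1 m 1 id f) n (gmul R 1 m n a y) = gmap R m k f n (gmul R 1 m n a y)"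
        by (rule gmap_cong[OF _ Ay]) (rule smash_l1[OF f])
      ultimately show ?thesis using gmap_id[OF a1] by simp
    qed
    show "(if hz_map m k f v \<in> hz_elts k then gmul R k 1 n (gmul R 1 k n a (\<phi> k (hz_map m k f v))) b else undefined) =
          gmap R m k f n (if v \<in> hz_elts m then gmul R m 1 n (gmul R 1 m n a (\<phi> m v)) b else undefined)"
      using v hz_map_in[of m k f v] mm_nat[OF phi f v] e1 e2 unfolding y_def by simp
  next
    have h1: "hz_one \<in> hz_elts 1" unfolding hz_one_def hz_elts_def by simp
    show "(if hz_one \<in> hz_elts 1 then gmul R 1 1 n (gmul R 1 1 n a (\<phi> 1 hz_one)) b else undefined) = gone R n"
      using h1 phi one_r[OF a1] b1 unfolding mult_map_def by simp
  next
    fix m k v w assume vw: "v \<in> hz_elts m \<and> w \<in> hz_elts k"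
    then have v: "v \<in> hz_elts m" and w: "w \<in> hz_elts k" by auto
    show "(if hz_mul m k v w \<in> hz_elts (m * k) then gmul R (m * k) 1 n (gmul R 1 (m * k) n a (\<phi> (m * k) (hz_mul m k v w))) b else undefined) =
        gmul R m k n (if v \<in> hz_elts m then gmul R m 1 n (gmul R 1 m n a (\<phi> m v)) b else undefined)
          (if w \<in> hz_elts k then gmul R k 1 n (gmul R 1 k n a (\<phi> k w)) b else undefined)"
      using v w hz_mul_in[of m k v w] mm_mul[OF phi v w] conj_mul[OF mm_in[OF phi v] mm_in[OF phi w] a1 b1(1) b1(3)]
      by simp
  qed
qed

lemma face_unit: "a \<in> units R n \<Longrightarrow> 1 \<le> n \<Longrightarrow> i \<le> n \<Longrightarrow> gface R 1 n i a \<in> units R (n - 1)"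
proof -
  assume a: "a \<in> units R n" and ni: "1 \<le> n" "i \<le> n"
  obtain b where b: "b \<in> gelts R 1 n" "gmul R 1 1 n a b = gone R n" "gmul R 1 1 n b a = gone R n"
    using a unfolding units_def by blast
  have a1: "a \<in> gelts R 1 n" using a unfolding units_def by blast
  have "gmul R 1 1 (n - 1) (gface R 1 n i a) (gface R 1 n i b) = gone R (n - 1)"
    using face_gmul[OF ni a1 b(1)] b(2) face_one[OF ni] by simp
  moreover have "gmul R 1 1 (n - 1) (gface R 1 n i b) (gface R 1 n i a) = gone R (n - 1)"
    using face_gmul[OF ni b(1) a1] b(3) face_one[OF ni] by simp
  ultimately show ?thesis unfolding units_def using face_in[OF ni a1] face_in[OF ni b(1)] by blast
qed

end



lemma scX: "scar (hG R (fdl_sset R) (fdl_act R)) n = {(gs, x). length gs = n \<and> set gs \<subseteq> units R n \<and> is_fdl R n x}"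
  by (simp add: hG_def hoorb_def unit_group_def fdl_sset_def)

lemma scY: "scar (hG R (hom_sset R) (hom_act R)) n = {(gs, x). length gs = n \<and> set gs \<subseteq> units R n \<and> mult_map R n x}"
  by (simp add: hG_def hoorb_def unit_group_def hom_sset_def)

theorem theorem3p9:
  fixes R :: "'a gring"
  assumes "is_gamma_ring R"
  shows "sset_iso (hG R (fdl_sset R) (fdl_act R)) (hG R (hom_sset R) (hom_act R))"
proof -
  interpret GR R by unfold_locales (rule assms)
  define F where "F n = (\<lambda>(gs :: 'a list, r). (gs, PhiD R n r))" for n
  define Gi where "Gi = (\<lambda>(gs :: 'a list, \<phi> :: nat \<Rightarrow> (nat \<Rightarrow> int) \<Rightarrow> 'a). (gs, \<phi> 2 (sgnv 1)))"
  have E1: "PhiD R (n - 1) (gface R 2 n i r) = sface (hom_sset R) n i (PhiD R n r)"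
    if "is_fdl R n r" "1 \<le> n" "i \<le> n" for n i r
  proof -
    have m: "mult_map R n (PhiD R n r)" and v: "PhiD R n r 2 (sgnv 1) = r" using Phi_fdl[OF that(1)] by auto
    have m': "mult_map R (n - 1) (sface (hom_sset R) n i (PhiD R n r))" by (rule face_mm[OF m that(2,3)])
    have "sface (hom_sset R) n i (PhiD R n r) 2 (sgnv 1) = gface R 2 n i r"
      using v sgn_in[of 1] by (simp add: hom_sset_def)
    then show ?thesis using Phi_of_mm[OF m'] by simp
  qed
  have E2: "PhiD R (n - 1) (fdl_act R (n - 1) a (gface R 2 n i r)) = hom_act R (n - 1) a (sface (hom_sset R) n i (PhiD R n r))"
    if "is_fdl R n r" "1 \<le> n" "i \<le> n" "a \<in> units R (n - 1)" for n i r a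
  proof -
    have m: "mult_map R n (PhiD R n r)" and v: "PhiD R n r 2 (sgnv 1) = r" using Phi_fdl[OF that(1)] by auto
    have m': "mult_map R (n - 1) (sface (hom_sset R) n i (PhiD R n r))" by (rule face_mm[OF m that(2,3)])
    have m'': "mult_map R (n - 1) (hom_act R (n - 1) a (sface (hom_sset R) n i (PhiD R n r)))" by (rule act_mm[OF m' that(4)])
    have "hom_act R (n - 1) a (sface (hom_sset R) n i (PhiD R n r)) 2 (sgnv 1) = fdl_act R (n - 1) a (gface R 2 n i r)"
      using v sgn_in[of 1] by (simp add: hom_sset_def hom_act_def fdl_act_def)
    then show ?thesis using Phi_of_mm[OF m''] by simp
  qed
  have E3: "PhiD R (Suc n) (gdeg R 2 n i r) = sdeg (hom_sset R) n i (PhiD R n r)"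
    if "is_fdl R n r" "i \<le> n" for n i r
  proof -
    have m: "mult_map R n (PhiD R n r)" and v: "PhiD R n r 2 (sgnv 1) = r" using Phi_fdl[OF that(1)] by auto
    have m': "mult_map R (Suc n) (sdeg (hom_sset R) n i (PhiD R n r))" by (rule deg_mm[OF m that(2)])
    have "sdeg (hom_sset R) n i (PhiD R n r) 2 (sgnv 1) = gdeg R 2 n i r"
      using v sgn_in[of 1] by (simp add: hom_sset_def)
    then show ?thesis using Phi_of_mm[OF m'] by simp
  qed
  show ?thesis unfolding sset_iso_def
  proof (intro exI[of _ F] conjI allI impI)
    fix n
    show "bij_betw (F n) (scar (hG R (fdl_sset R) (fdl_act R)) n) (scar (hG R (hom_sset R) (hom_act R)) n)"
      unfolding scX scY
    proof (rule bij_betw_byWitness[where f' = Gi])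
      show "\<forall>a\<in>{(gs, x). length gs = n \<and> set gs \<subseteq> units R n \<and> is_fdl R n x}. Gi (F n a) = a"
        using Phi_fdl unfolding F_def Gi_def by auto
      show "\<forall>a'\<in>{(gs, x). length gs = n \<and> set gs \<subseteq> units R n \<and> mult_map R n x}. F n (Gi a') = a'"
        using Phi_of_mm unfolding F_def Gi_def by auto
      show "F n ` {(gs, x). length gs = n \<and> set gs \<subseteq> units R n \<and> is_fdl R n x}
          \<subseteq> {(gs, x). length gs = n \<and> set gs \<subseteq> units R n \<and> mult_map R n x}"
        using Phi_fdl unfolding F_def by auto
      show "Gi ` {(gs, x). length gs = n \<and> set gs \<subseteq> units R n \<and> mult_map R n x}
          \<subseteq> {(gs, x). length gs = n \<and> set gs \<subseteq> units R n \<and> is_fdl R n x}"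
        using mm_fdl unfolding Gi_def by auto
    qed
  next
    fix n i x
    assume a: "1 \<le> n \<and> i \<le> n \<and> x \<in> scar (hG R (fdl_sset R) (fdl_act R)) n"
    obtain gs r where x: "x = (gs, r)" by force
    have gs: "length gs = n" "set gs \<subseteq> units R n" and r: "is_fdl R n r" using a unfolding x scX by auto
    have ni: "1 \<le> n" "i \<le> n" using a by auto
    have lu: "last (map (gface R 1 n i) gs) \<in> units R (n - 1)"
    proof -
      have "gs \<noteq> []" using gs ni by auto
      then have "last gs \<in> units R n" using gs by auto
      then show ?thesis using face_unit[OF _ ni] \<open>gs \<noteq> []\<close> by (simp add: last_map)
    qed
    show "F (n - 1) (sface (hG R (fdl_sset R) (fdl_act R)) n i x) = sface (hG R (hom_sset R) (hom_act R)) n i (F n x)"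
      unfolding x using E1[OF r ni] E2[OF r ni lu] ni
      by (cases "i = 0"; cases "i = n") (simp_all add: hG_def hoorb_def unit_group_def fdl_sset_def F_def Let_def)
  next
    fix n i x
    assume a: "i \<le> n \<and> x \<in> scar (hG R (fdl_sset R) (fdl_act R)) n"
    obtain gs r where x: "x = (gs, r)" by force
    have r: "is_fdl R n r" using a unfolding x scX by auto
    show "F (Suc n) (sdeg (hG R (fdl_sset R) (fdl_act R)) n i x) = sdeg (hG R (hom_sset R) (hom_act R)) n i (F n x)"
      unfolding x using E3[OF r] a
      by (simp add: hG_def hoorb_def unit_group_def fdl_sset_def F_def Let_def)
  qed
qed



end
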